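(* Let $x\in\mathbb C^n\setminus\Delta$ be such that the weighted arrangement $(\mathcal A(x),a)$ is unbalanced. Then for every $j\in J$ the operator of multiplication by $[a_j/f_j]$ in $\mathcal O(C_{\mathcal A(x),a})$ equals the operator $K_j(x)$; that is, for every $k$-element sequence $i_1,\dots,i_k$ in $J$, $$\Big[\frac{a_j}{f_j}\Big]\cdot w_{i_1,\dots,i_k}=K_j(x)\,w_{i_1,\dots,i_k}.$$
   Context: Let $0<k<n$, $J=\{1,\dots,n\}$. On $\mathbb C^k$ (coordinates $t_1,\dots,t_k$) fix nonzero linear functions $g_j=b^1_jt_1+\dots+b^k_jt_k$, $j\in J$, spanning $(\mathbb C^k)^*$. For $x\in\mathbb C^n$, $\mathcal A(x)$ is the arrangement in $\mathbb C^k$ of hyperplanes $H_j(x)=\{f_j=0\}$, $f_j=g_j+x_j$, with complement $U(\mathcal A(x))$. For $I=\{i_1,\dots,i_k\}$ (ordered) let $d_{i_1,\dots,i_k}=\det_{i,l=1}^k(b^i_{i_l})$. Circuits and discriminant: a subset $C\subset J$ is a circuit if $(g_i)_{i\in C}$ are linearly dependent but every proper subset is independent. For each circuit $C$ fix a nonzero collection $(\lambda^C_i)_{i\in J}$, $\lambda^C_i=0$ for $i\notin C$, with $\sum_i\lambda^C_ig_i=0$, and set $f_C(z)=\sum_i\lambda^C_iz_i$. The discriminant is $\Delta=\bigcup_C\{f_C=0\}\subset\mathbb C^n$; for $x\notin\Delta$, $\mathcal A(x)$ has normal crossings. A subset of $J$ is independent if the corresponding $g_i$ are linearly independent. Weights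 $a\in(\mathbb C^\times)^n$; $\Phi=\sum_ja_j\log f_j$. $\mathcal O(C_{\mathcal A(x),a})=\mathcal O(U(\mathcal A(x)))/I$, with $I$ the ideal generated by $\partial\Phi/\partial t_i=\sum_jb^i_ja_j/f_j$, $i=1,\dots,k$; $[f]$ is the class of $f$. Marked elements: $w_{i_1,\dots,i_k}=d_{i_1,\dots,i_k}\,[a_{i_1}/f_{i_1}]\cdots[a_{i_k}/f_{i_k}]\in\mathcal O(C_{\mathcal A(x),a})$; they are skew-symmetric in the indices and vanish for dependent index sets, and (for unbalanced weight) they span $\mathcal O(C_{\mathcal A(x),a})$. Operators: for a circuit $C$, listed in some order as $i_1,\dots,i_r$, and $C_m=C\setminus\{i_m\}$, define $L_C$ on marked elements: $L_C(w_{j_1,\dots,j_k})=0$ if $|\{j_1,\dots,j_k\}\cap C|<r-1$; if $\{j_1,\dots,j_k\}\cap C=C_m$, write (using skew-symmetry) $w_{j_1,\dots,j_k}=\pm w_{i_1,\dots,\widehat{i_m},\dots,i_r,s_1,\dots,s_{k-r+1}}$ with $\{s_1,\dots,s_{k-r+1}\}=\{j_1,\dots,j_k\}\setminus C_m$, and set $L_C(w_{i_1,\dots,\widehat{i_m},\dots,i_r,s_1,\dots,s_{k-r+1}})=(-1)^m\sum_{l=1}^r(-1)^la_{i_l}w_{i_1,\dots,\widehat{i_l},\dots,i_r,s_1,\dots,s_{k-r+1}}$. Then $K_j(x)=\sum_{C}\frac{\lambda^C_j}{f_C(x)}L_C$, the sum over all circuits. Unbalanced: for an arrangement in $\mathbb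 C^k$ with weights $a_j$, adjoin $H_\infty=\mathbb P^k\setminus\mathbb C^k$ with weight $-\sum_ja_j$; the weight of an edge (nonempty intersection of hyperplanes) is the sum of the weights of the hyperplanes containing it; an edge is dense if the hyperplanes containing it form an irreducible arrangement (not splittable, after a coordinate change, into two nonempty groups in disjoint coordinates). The weighted arrangement is unbalanced if no dense edge of the projective arrangement has weight $0$. *)

theory Defs
  imports Complex_Main "HOL-Combinatorics.Permutations"
begin

text \<open>J = {1..n}. Points of C^k are functions t :: nat => complex
  (coordinates t 1, ..., t k). The linear function g_j is given by its
  coefficients b i j = b^i_j (i in {1..k}). Sequences i_1..i_k are lists of length k.\<close>

definition gfun :: "nat \<Rightarrow> (nat \<Rightarrow> nat \<Rightarrow> complex) \<Rightarrow> nat \<Rightarrow> (nat \<Rightarrow> complex) \<Rightarrow> complex" where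
  "gfun k b j t = (\<Sum>i=1..k. b i j * t i)"

definition ffun :: "nat \<Rightarrow> (nat \<Rightarrow> nat \<Rightarrow> complex) \<Rightarrow> (nat \<Rightarrow> complex) \<Rightarrow> nat \<Rightarrow> (nat \<Rightarrow> complex) \<Rightarrow> complex" where
  "ffun k b x j t = gfun k b j t + x j"

definition cspace :: "nat \<Rightarrow> (nat \<Rightarrow> complex) set" where
  "cspace k = {t. \<forall>i. i \<notin> {1..k} \<longrightarrow> t i = 0}"

definition complU :: "nat \<Rightarrow> nat \<Rightarrow> (nat \<Rightarrow> nat \<Rightarrow> complex) \<Rightarrow> (nat \<Rightarrow> complex) \<Rightarrow> (nat \<Rightarrow> complex) set" where
  "complU k n b x = {t \<in> cspace k. \<forall>j\<in>{1..n}. ffun k b x j t \<noteq> 0}"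

text \<open>Regular functions on U(A(x)): the C-algebra generated by the coordinate functions and
  the functions 1/f_j (U is the principal open set where prod f_j is nonzero).\<close>
inductive_set regfun :: "nat \<Rightarrow> nat \<Rightarrow> (nat \<Rightarrow> nat \<Rightarrow> complex) \<Rightarrow> (nat \<Rightarrow> complex)
    \<Rightarrow> ((nat \<Rightarrow> complex) \<Rightarrow> complex) set"
  for k n b x where
  rf_const: "(\<lambda>t. c) \<in> regfun k n b x"
| rf_coord: "i \<in> {1..k} \<Longrightarrow> (\<lambda>t. t i) \<in> regfun k n b x"
| rf_inv: "j \<in> {1..n} \<Longrightarrow> (\<lambda>t. 1 / ffun k b x j t) \<in> regfun k n b x"
| rf_add: "p \<in> regfun k n b x \<Longrightarrow> q \<in> regfun k n b x \<Longrightarrow> (\<lambda>t. p t + q t) \<in> regfun k n b x"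
| rf_mult: "p \<in> regfun k n b x \<Longrightarrow> q \<in> regfun k n b x \<Longrightarrow> (\<lambda>t. p t * q t) \<in> regfun k n b x"

definition dPhi :: "nat \<Rightarrow> nat \<Rightarrow> (nat \<Rightarrow> nat \<Rightarrow> complex) \<Rightarrow> (nat \<Rightarrow> complex) \<Rightarrow> (nat \<Rightarrow> complex)
    \<Rightarrow> nat \<Rightarrow> (nat \<Rightarrow> complex) \<Rightarrow> complex" where
  "dPhi k n b x a i t = (\<Sum>j=1..n. b i j * a j / ffun k b x j t)"

text \<open>Two regular functions have the same class in O(C_{A(x),a}) = O(U)/I iff their difference
  lies in the ideal I generated by the dPhi/dt_i, i.e. is of the form sum_i c_i dPhi/dt_i with
  c_i regular (equality of functions on U).\<close>
definition same_class :: "nat \<Rightarrow> nat \<Rightarrow> (nat \<Rightarrow> nat \<Rightarrow> complex) \<Rightarrow> (nat \<Rightarrow> complex) \<Rightarrow> (nat \<Rightarrow> complex)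
    \<Rightarrow> ((nat \<Rightarrow> complex) \<Rightarrow> complex) \<Rightarrow> ((nat \<Rightarrow> complex) \<Rightarrow> complex) \<Rightarrow> bool" where
  "same_class k n b x a p q \<longleftrightarrow>
     (\<exists>c :: nat \<Rightarrow> (nat \<Rightarrow> complex) \<Rightarrow> complex.
        (\<forall>i\<in>{1..k}. c i \<in> regfun k n b x) \<and>
        (\<forall>t\<in>complU k n b x. p t - q t = (\<Sum>i=1..k. c i t * dPhi k n b x a i t)))"

definition dcoef :: "nat \<Rightarrow> (nat \<Rightarrow> nat \<Rightarrow> complex) \<Rightarrow> nat list \<Rightarrow> complex" where
  "dcoef k b js = (\<Sum>p | p permutes {0..<k}.
      of_int (sign p) * (\<Prod>i<k. b (Suc i) (js ! (p i))))"

text \<open>Representative in O(U) of the marked element w_{i_1..i_k}.\<close>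
definition wfun :: "nat \<Rightarrow> (nat \<Rightarrow> nat \<Rightarrow> complex) \<Rightarrow> (nat \<Rightarrow> complex) \<Rightarrow> (nat \<Rightarrow> complex)
    \<Rightarrow> nat list \<Rightarrow> (nat \<Rightarrow> complex) \<Rightarrow> complex" where
  "wfun k b x a js t = dcoef k b js * (\<Prod>l<length js. a (js ! l) / ffun k b x (js ! l) t)"

definition indep_set :: "nat \<Rightarrow> (nat \<Rightarrow> nat \<Rightarrow> complex) \<Rightarrow> nat set \<Rightarrow> bool" where
  "indep_set k b S \<longleftrightarrow>
     (\<forall>c :: nat \<Rightarrow> complex. (\<forall>i\<in>{1..k}. (\<Sum>j\<in>S. c j * b i j) = 0) \<longrightarrow> (\<forall>j\<in>S. c j = 0))"

definition circuit :: "nat \<Rightarrow> nat \<Rightarrow> (nat \<Rightarrow> nat \<Rightarrow> complex) \<Rightarrow> nat set \<Rightarrow> bool" where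
  "circuit k n b C \<longleftrightarrow> C \<subseteq> {1..n} \<and> \<not> indep_set k b C \<and> (\<forall>D. D \<subset> C \<longrightarrow> indep_set k b D)"

definition fC :: "(nat set \<Rightarrow> nat \<Rightarrow> complex) \<Rightarrow> nat \<Rightarrow> nat set \<Rightarrow> (nat \<Rightarrow> complex) \<Rightarrow> complex" where
  "fC lam n C z = (\<Sum>i=1..n. lam C i * z i)"

text \<open>Sign relating w_{js} to w_{seq} when js is a rearrangement of the distinct list seq:
  (-1)^(number of inversions).\<close>
definition rearr_sign :: "nat list \<Rightarrow> nat list \<Rightarrow> complex" where
  "rearr_sign js sq = (-1) ^ card {(p, q). p < q \<and> q < length js \<and>
       (\<exists>p' q'. q' < p' \<and> p' < length sq \<and> sq ! p' = js ! p \<and> sq ! q' = js ! q)}"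

text \<open>The circuit C is listed
  increasingly as i_1 < ... < i_r (cs ! (l-1) = i_l). If js is not distinct, or contains all of C,
  then w_{js} = 0 and the value is 0. If set js \<inter> C = C_m (m = m0+1) the paper's formula is used
  after rewriting w_{js} = \<plusminus> w_{i_1..\<widehat>i_m..i_r, s_1..s_{k-r+1}}, the s's taken in the order
  in which they occur in js.\<close>
definition LC :: "nat \<Rightarrow> (nat \<Rightarrow> nat \<Rightarrow> complex) \<Rightarrow> (nat \<Rightarrow> complex) \<Rightarrow> (nat \<Rightarrow> complex)
    \<Rightarrow> nat set \<Rightarrow> nat list \<Rightarrow> (nat \<Rightarrow> complex) \<Rightarrow> complex" where
  "LC k b x a C js t =
    (let cs = sorted_list_of_set C; r = length cs; ss = filter (\<lambda>j. j \<notin> C) js;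
         omit = (\<lambda>l. take l cs @ drop (Suc l) cs)
     in if distinct js \<and> (\<exists>m0<r. set js \<inter> C = C - {cs ! m0})
        then (let m0 = (THE m0. m0 < r \<and> set js \<inter> C = C - {cs ! m0})
              in rearr_sign js (omit m0 @ ss) * (-1) ^ (Suc m0) *
                 (\<Sum>l<r. (-1) ^ (Suc l) * a (cs ! l) * wfun k b x a (omit l @ ss) t))
        else 0)"

definition Kop :: "nat \<Rightarrow> nat \<Rightarrow> (nat \<Rightarrow> nat \<Rightarrow> complex) \<Rightarrow> (nat \<Rightarrow> complex) \<Rightarrow> (nat \<Rightarrow> complex)
    \<Rightarrow> (nat set \<Rightarrow> nat \<Rightarrow> complex) \<Rightarrow> nat \<Rightarrow> nat list \<Rightarrow> (nat \<Rightarrow> complex) \<Rightarrow> complex" where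
  "Kop k n b x a lam j js t =
     (\<Sum>C | circuit k n b C. lam C j / fC lam n C x * LC k b x a C js t)"

text \<open>Projective arrangement in P^k, homogeneous coordinates v 0, v 1, ..., v k (t_i = v i / v 0).
  Index 0 stands for H_infinity = {v 0 = 0}; index j in {1..n} for the closure of H_j(x),
  given by the linear form x_j v_0 + sum_i b^i_j v_i.\<close>
definition pcoef :: "(nat \<Rightarrow> nat \<Rightarrow> complex) \<Rightarrow> (nat \<Rightarrow> complex) \<Rightarrow> nat \<Rightarrow> nat \<Rightarrow> complex" where
  "pcoef b x m q = (if m = 0 then (if q = 0 then 1 else 0) else (if q = 0 then x m else b q m))"

definition pform :: "nat \<Rightarrow> (nat \<Rightarrow> nat \<Rightarrow> complex) \<Rightarrow> (nat \<Rightarrow> complex) \<Rightarrow> nat \<Rightarrow> (nat \<Rightarrow> complex) \<Rightarrow> complex" where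
  "pform k b x m v = (\<Sum>q=0..k. pcoef b x m q * v q)"

definition hspace :: "nat \<Rightarrow> (nat \<Rightarrow> complex) set" where
  "hspace k = {v. \<forall>q. q > k \<longrightarrow> v q = 0}"

text \<open>The (cone over the) intersection of the hyperplanes with indices in S.\<close>
definition pint :: "nat \<Rightarrow> (nat \<Rightarrow> nat \<Rightarrow> complex) \<Rightarrow> (nat \<Rightarrow> complex) \<Rightarrow> nat set \<Rightarrow> (nat \<Rightarrow> complex) set" where
  "pint k b x S = {v \<in> hspace k. \<forall>m\<in>S. pform k b x m v = 0}"

definition containing :: "nat \<Rightarrow> nat \<Rightarrow> (nat \<Rightarrow> nat \<Rightarrow> complex) \<Rightarrow> (nat \<Rightarrow> complex) \<Rightarrow> (nat \<Rightarrow> complex) set \<Rightarrow> nat set" where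
  "containing k n b x V = {m \<in> {0..n}. \<forall>v\<in>V. pform k b x m v = 0}"

definition pweight :: "nat \<Rightarrow> (nat \<Rightarrow> complex) \<Rightarrow> nat \<Rightarrow> complex" where
  "pweight n a m = (if m = 0 then - (\<Sum>j=1..n. a j) else a m)"

text \<open>Reducibility of the sub-arrangement with index set T: after a linear change of the
  homogeneous coordinates (invertible matrix M, new forms = old forms composed with M) it splits
  into two nonempty groups T1, T2 whose forms involve disjoint sets P1, P2 of coordinates.\<close>
definition reducible :: "nat \<Rightarrow> (nat \<Rightarrow> nat \<Rightarrow> complex) \<Rightarrow> (nat \<Rightarrow> complex) \<Rightarrow> nat set \<Rightarrow> bool" where
  "reducible k b x T \<longleftrightarrow>
    (\<exists>T1 T2 P1 P2 (M :: nat \<Rightarrow> nat \<Rightarrow> complex) (N :: nat \<Rightarrow> nat \<Rightarrow> complex).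
       T1 \<noteq> {} \<and> T2 \<noteq> {} \<and> T1 \<union> T2 = T \<and> T1 \<inter> T2 = {} \<and>
       P1 \<inter> P2 = {} \<and>
       (\<forall>p\<in>{0..k}. \<forall>q\<in>{0..k}. (\<Sum>s=0..k. M p s * N s q) = (if p = q then 1 else 0)) \<and>
       (\<forall>m\<in>T1. \<forall>q\<in>{0..k} - P1. (\<Sum>s=0..k. pcoef b x m s * M s q) = 0) \<and>
       (\<forall>m\<in>T2. \<forall>q\<in>{0..k} - P2. (\<Sum>s=0..k. pcoef b x m s * M s q) = 0))"

text \<open>Unbalanced: every dense edge of the projective arrangement has nonzero weight. An edge is
  a nonempty (in P^k, i.e. nonzero cone) intersection of at least one hyperplane; it is dense if
  the arrangement of the hyperplanes containing it is irreducible.\<close>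
definition unbalanced :: "nat \<Rightarrow> nat \<Rightarrow> (nat \<Rightarrow> nat \<Rightarrow> complex) \<Rightarrow> (nat \<Rightarrow> complex) \<Rightarrow> (nat \<Rightarrow> complex) \<Rightarrow> bool" where
  "unbalanced k n b x a \<longleftrightarrow>
    (\<forall>S. S \<subseteq> {0..n} \<longrightarrow> S \<noteq> {} \<longrightarrow> (\<exists>v\<in>pint k b x S. v \<noteq> (\<lambda>_. 0)) \<longrightarrow>
       \<not> reducible k b x (containing k n b x (pint k b x S)) \<longrightarrow>
       (\<Sum>m\<in>containing k n b x (pint k b x S). pweight n a m) \<noteq> 0)"

end

theory Submission
  imports Defs "Jordan_Normal_Form.Determinant"
begin


definition cmat :: "nat \<Rightarrow> (nat \<Rightarrow> nat \<Rightarrow> complex) \<Rightarrow> nat list \<Rightarrow> complex mat" where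
  "cmat m A L = mat m m (\<lambda>(i,c). A i (L ! c))"

definition cdet :: "nat \<Rightarrow> (nat \<Rightarrow> nat \<Rightarrow> complex) \<Rightarrow> nat list \<Rightarrow> complex" where
  "cdet m A L = det (cmat m A L)"

definition dl :: "nat \<Rightarrow> nat list \<Rightarrow> nat list" where
  "dl q L = take q L @ drop (Suc q) L"

lemma cmat_carrier[simp]: "cmat m A L \<in> carrier_mat m m"
  by (simp add: cmat_def)

lemma dcoef_cdet: "dcoef k b js = cdet k (\<lambda>i. b (Suc i)) js"
  unfolding dcoef_def cdet_def cmat_def
  by (subst det_def'[of _ k]) (auto simp: atLeast0LessThan intro!: sum.cong prod.cong)

lemma length_dl[simp]: "q < length L \<Longrightarrow> length (dl q L) = length L - 1"
  by (simp add: dl_def)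

lemma nth_dl: "q < length L \<Longrightarrow> c < length L - 1 \<Longrightarrow> dl q L ! c = (if c < q then L ! c else L ! Suc c)"
  by (auto simp: dl_def nth_append min_def)

lemma cdet_swap2:
  assumes "length X + 2 + length Y = m"
  shows "cdet m A (X @ a # b # Y) = - cdet m A (X @ b # a # Y)"
proof -
  let ?M = "cmat m A (X @ b # a # Y)"
  have "cmat m A (X @ a # b # Y) = swapcols (length X) (Suc (length X)) ?M"
    using assms
    by (intro eq_matI) (auto simp: cmat_def mat_swapcols_def nth_append nth_Cons' split: if_splits)
  then show ?thesis unfolding cdet_def
    using det_swapcols[of "length X" m "Suc (length X)" ?M] assms by simp
qed

lemma cdet_nondistinct:
  assumes "length L = m" "\<not> distinct L"
  shows "cdet m A L = 0"
proof -
  obtain i j where ij: "i < m" "j < m" "i \<noteq> j" "L ! i = L ! j"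
    using assms by (auto simp: distinct_conv_nth)
  show ?thesis unfolding cdet_def
    by (rule det_identical_columns[OF cmat_carrier ij(3) ij(1) ij(2)])
       (use ij in \<open>auto simp: cmat_def intro!: eq_vecI\<close>)
qed

lemma cdet_zero_iff:
  "cdet m A L = 0 \<longleftrightarrow> (\<exists>w. (\<exists>p<m. w p \<noteq> 0) \<and> (\<forall>i<m. (\<Sum>p<m. A i (L ! p) * w p) = 0))"
proof -
  have "cdet m A L = 0 \<longleftrightarrow> (\<exists> v. v \<in> carrier_vec m \<and> v \<noteq> 0\<^sub>v m \<and> cmat m A L *\<^sub>v v = 0\<^sub>v m)"
    unfolding cdet_def by (rule det_0_iff_vec_prod_zero[OF cmat_carrier])
  also have "\<dots> \<longleftrightarrow> (\<exists>w. (\<exists>p<m. w p \<noteq> 0) \<and> (\<forall>i<m. (\<Sum>p<m. A i (L ! p) * w p) = 0))"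
  proof
    assume "\<exists> v. v \<in> carrier_vec m \<and> v \<noteq> 0\<^sub>v m \<and> cmat m A L *\<^sub>v v = 0\<^sub>v m"
    then obtain v where v: "v \<in> carrier_vec m" "v \<noteq> 0\<^sub>v m" "cmat m A L *\<^sub>v v = 0\<^sub>v m" by blast
    have "\<exists>p<m. v $ p \<noteq> 0"
    proof (rule ccontr)
      assume "\<not> ?thesis"
      then have "v = 0\<^sub>v m" using v(1) by (intro eq_vecI) auto
      then show False using v(2) by simp
    qed
    moreover have "\<forall>i<m. (\<Sum>p<m. A i (L ! p) * v $ p) = 0"
    proof (intro allI impI)
      fix i assume i: "i < m"
      have "(cmat m A L *\<^sub>v v) $ i = 0" using v(3) i by simp
      then show "(\<Sum>p<m. A i (L ! p) * v $ p) = 0"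
        using i v(1) by (simp add: cmat_def mult_mat_vec_def scalar_prod_def row_def atLeast0LessThan)
    qed
    ultimately show "\<exists>w. (\<exists>p<m. w p \<noteq> 0) \<and> (\<forall>i<m. (\<Sum>p<m. A i (L ! p) * w p) = 0)" by blast
  next
    assume "\<exists>w. (\<exists>p<m. w p \<noteq> 0) \<and> (\<forall>i<m. (\<Sum>p<m. A i (L ! p) * w p) = 0)"
    then obtain w where w: "\<exists>p<m. w p \<noteq> 0" "\<forall>i<m. (\<Sum>p<m. A i (L ! p) * w p) = 0" by blast
    let ?v = "vec m w"
    have "?v \<noteq> 0\<^sub>v m" using w(1) by (auto simp: vec_eq_iff)
    moreover have "cmat m A L *\<^sub>v ?v = 0\<^sub>v m"
      using w(2) by (intro eq_vecI) (auto simp: cmat_def mult_mat_vec_def scalar_prod_def row_def atLeast0LessThan)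
    moreover have "?v \<in> carrier_vec m" by simp
    ultimately show "\<exists> v. v \<in> carrier_vec m \<and> v \<noteq> 0\<^sub>v m \<and> cmat m A L *\<^sub>v v = 0\<^sub>v m" by blast
  qed
  finally show ?thesis .
qed

lemma mat_delete_cmat0:
  assumes "length L = Suc m" "q < Suc m"
  shows "mat_delete (cmat (Suc m) A L) 0 q = cmat m (\<lambda>i. A (Suc i)) (dl q L)"
  using assms by (intro eq_matI) (auto simp: cmat_def mat_delete_def nth_dl)

lemma cdet_row0:
  assumes "length L = Suc m"
  shows "cdet (Suc m) A L = (\<Sum>p<Suc m. (-1)^p * A 0 (L ! p) * cdet m (\<lambda>i. A (Suc i)) (dl p L))"
proof -
  have "cdet (Suc m) A L = (\<Sum>p<Suc m. cmat (Suc m) A L $$ (0,p) * cofactor (cmat (Suc m) A L) 0 p)"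
    unfolding cdet_def by (rule laplace_expansion_row[OF cmat_carrier]) simp
  also have "\<dots> = (\<Sum>p<Suc m. (-1)^p * A 0 (L ! p) * cdet m (\<lambda>i. A (Suc i)) (dl p L))"
  proof (intro sum.cong refl)
    fix p assume p: "p \<in> {..<Suc m}"
    then show "cmat (Suc m) A L $$ (0,p) * cofactor (cmat (Suc m) A L) 0 p = (-1)^p * A 0 (L ! p) * cdet m (\<lambda>i. A (Suc i)) (dl p L)"
      using assms mat_delete_cmat0[OF assms, of p A] by (simp add: cofactor_def cdet_def cmat_def)
  qed
  finally show ?thesis .
qed

lemma cdet_col:
  assumes "length L = m" "q < m"
  shows "cdet m A (L[q := l]) = (\<Sum>i<m. A i l * cofactor (cmat m A L) i q)"
proof -
  have "cdet m A (L[q := l]) = (\<Sum>i<m. cmat m A (L[q:=l]) $$ (i,q) * cofactor (cmat m A (L[q:=l])) i q)"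
    unfolding cdet_def by (rule laplace_expansion_column[OF cmat_carrier assms(2)])
  also have "\<dots> = (\<Sum>i<m. A i l * cofactor (cmat m A L) i q)"
  proof (intro sum.cong refl)
    fix i assume "i \<in> {..<m}"
    have "mat_delete (cmat m A (L[q:=l])) i q = mat_delete (cmat m A L) i q"
      using assms by (intro eq_matI) (auto simp: cmat_def mat_delete_def nth_list_update)
    then show "cmat m A (L[q:=l]) $$ (i,q) * cofactor (cmat m A (L[q:=l])) i q = A i l * cofactor (cmat m A L) i q"
      using assms \<open>i \<in> {..<m}\<close> by (simp add: cofactor_def cmat_def)
  qed
  finally show ?thesis .
qed

lemma cofactor0_cmat:
  assumes "length L = Suc m" "q < Suc m"
  shows "cofactor (cmat (Suc m) A L) 0 q = (-1)^q * cdet m (\<lambda>i. A (Suc i)) (dl q L)"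
  using assms by (simp add: cofactor_def mat_delete_cmat0 cdet_def)



definition tau :: "nat \<Rightarrow> nat \<Rightarrow> nat" where
  "tau p i = (if i = p then Suc p else if i = Suc p then p else i)"

lemma tau_tau[simp]: "tau p (tau p i) = i" by (simp add: tau_def)
lemma tau_p[simp]: "tau p p = Suc p" "tau p (Suc p) = p" by (simp_all add: tau_def)

lemma tau_less: "i < j \<Longrightarrow> (i, j) \<noteq> (p, Suc p) \<Longrightarrow> tau p i < tau p j"
  by (auto simp: tau_def)

lemma tau_bound: "Suc p < n \<Longrightarrow> j < n \<Longrightarrow> tau p j < n"
  by (auto simp: tau_def)

lemma card_swap_invs:
  assumes pn: "Suc p < n" and P1: "P p (Suc p)" and P2: "\<not> P (Suc p) p"
  shows "card {(i,j). i<j \<and> j<n \<and> P (tau p i) (tau p j)} = card {(i,j). i<j \<and> j<n \<and> P i j} - 1"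
    and "card {(i,j). i<j \<and> j<n \<and> P i j} > 0"
proof -
  let ?S = "{(i,j). i<j \<and> j<n \<and> P i j}"
  let ?S' = "{(i,j). i<j \<and> j<n \<and> P (tau p i) (tau p j)}"
  let ?f = "\<lambda>(i,j). (tau p i, tau p j)"
  have finS: "finite ?S" by (rule finite_subset[of _ "{..<n} \<times> {..<n}"]) auto
  have pin: "(p, Suc p) \<in> ?S" using pn P1 by auto
  have eq: "?S' = ?f ` (?S - {(p, Suc p)})"
  proof (rule equalityI; rule subsetI)
    fix z assume z: "z \<in> ?S'"
    obtain i j where ij: "z = (i,j)" by (cases z)
    have "(i,j) \<noteq> (p, Suc p)" using z ij P2 by auto
    then have "tau p i < tau p j" using z ij by (intro tau_less) auto
    moreover have "tau p j < n" using z ij pn by (intro tau_bound) auto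
    moreover have "(tau p i, tau p j) \<noteq> (p, Suc p)"
      using z ij by (auto simp: tau_def split: if_splits)
    ultimately have "(tau p i, tau p j) \<in> ?S - {(p, Suc p)}" using z ij by auto
    then show "z \<in> ?f ` (?S - {(p, Suc p)})" using ij by (auto intro!: image_eqI[of _ _ "(tau p i, tau p j)"])
  next
    fix z assume "z \<in> ?f ` (?S - {(p, Suc p)})"
    then obtain i j where ij: "(i,j) \<in> ?S - {(p, Suc p)}" "z = (tau p i, tau p j)" by auto
    have "tau p i < tau p j" using ij by (intro tau_less) auto
    moreover have "tau p j < n" using ij pn by (intro tau_bound) auto
    ultimately show "z \<in> ?S'" using ij by auto
  qed
  have inj: "inj_on ?f (?S - {(p, Suc p)})"
  proof (rule inj_onI)
    fix z1 z2 assume "?f z1 = ?f z2"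
    then have "?f (?f z1) = ?f (?f z2)" by simp
    then show "z1 = z2" by (cases z1, cases z2) simp
  qed
  show "card ?S' = card ?S - 1"
    using eq card_image[OF inj] card_Diff_singleton[OF pin] by simp
  show "card ?S > 0" using finS pin by (auto simp: card_gt_0_iff)
qed

definition pos :: "nat list \<Rightarrow> nat \<Rightarrow> nat" where
  "pos M e = (THE i. i < length M \<and> M ! i = e)"

lemma pos_nth: "distinct M \<Longrightarrow> i < length M \<Longrightarrow> pos M (M ! i) = i"
  unfolding pos_def by (rule the_equality) (auto simp: nth_eq_iff_index_eq)

lemma pos_in: "distinct M \<Longrightarrow> e \<in> set M \<Longrightarrow> pos M e < length M \<and> M ! pos M e = e"
  by (metis in_set_conv_nth pos_nth)

definition Rel :: "nat list \<Rightarrow> nat \<Rightarrow> nat \<Rightarrow> bool" where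
  "Rel M a b \<longleftrightarrow> (\<exists>p' q'. q' < p' \<and> p' < length M \<and> M ! p' = a \<and> M ! q' = b)"

lemma Rel_pos: "distinct M \<Longrightarrow> Rel M a b \<longleftrightarrow> a \<in> set M \<and> b \<in> set M \<and> pos M b < pos M a"
proof
  assume d: "distinct M" "Rel M a b"
  then obtain p' q' where pq: "q' < p'" "p' < length M" "M ! p' = a" "M ! q' = b" unfolding Rel_def by blast
  then show "a \<in> set M \<and> b \<in> set M \<and> pos M b < pos M a"
    using pos_nth[OF d(1), of p'] pos_nth[OF d(1), of q'] by auto
next
  assume d: "distinct M" "a \<in> set M \<and> b \<in> set M \<and> pos M b < pos M a"
  then show "Rel M a b" unfolding Rel_def
    using pos_in[OF d(1), of a] pos_in[OF d(1), of b] by blast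
qed

definition invs :: "nat list \<Rightarrow> nat list \<Rightarrow> (nat \<times> nat) set" where
  "invs L M = {(p,q). p < q \<and> q < length L \<and> Rel M (L ! p) (L ! q)}"

lemma rearr_sign_invs: "rearr_sign L M = (-1) ^ card (invs L M)"
  unfolding rearr_sign_def invs_def Rel_def by simp

lemma strict_mono_id:
  assumes "\<And>i j. i < j \<Longrightarrow> j < n \<Longrightarrow> f i < (f j :: nat)" "\<And>i. i < n \<Longrightarrow> f i < n" "i < n"
  shows "f i = i"
proof -
  have ge: "f j \<ge> f i + (j - i)" if "i \<le> j" "j < n" for i j
    using that
  proof (induction j)
    case 0 then show ?case by simp
  next
    case (Suc j)
    show ?case
    proof (cases "i = Suc j")
      case True then show ?thesis by simp
    next
      case False
      then have "i \<le> j" using Suc by simp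
      then have "f j \<ge> f i + (j - i)" using Suc by simp
      moreover have "f j < f (Suc j)" using assms(1) Suc by simp
      ultimately show ?thesis using \<open>i \<le> j\<close> by linarith
    qed
  qed
  have "f i \<ge> f 0 + i" using ge[of 0 i] assms(3) by simp
  moreover have "f (n - 1) \<ge> f i + (n - 1 - i)" using ge[of i "n - 1"] assms(3) by simp
  moreover have "f (n - 1) < n" using assms(2,3) by simp
  ultimately show ?thesis by linarith
qed

lemma no_adj_inv_eq:
  assumes dL: "distinct L" and dM: "distinct M" and sLM: "set L = set M"
    and noadj: "\<forall>p. Suc p < length L \<longrightarrow> \<not> Rel M (L ! p) (L ! Suc p)"
  shows "L = M"
proof -
  have len: "length L = length M" using distinct_card[OF dL] distinct_card[OF dM] sLM by simp
  define n where "n = length L"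
  define f where "f i = pos M (L ! i)" for i
  have inM: "L ! i \<in> set M" if "i < n" for i
  proof -
    have "L ! i \<in> set L" using that unfolding n_def by (rule nth_mem)
    then show ?thesis using sLM by blast
  qed
  have fb: "f i < n" if "i < n" for i
  proof -
    have "pos M (L ! i) < length M" using pos_in[OF dM inM[OF that]] by blast
    then show ?thesis unfolding f_def n_def len .
  qed
  have adj: "f p < f (Suc p)" if "Suc p < n" for p
  proof -
    have "\<not> Rel M (L ! p) (L ! Suc p)" using noadj that n_def by simp
    moreover have "L ! p \<in> set M" "L ! Suc p \<in> set M" using inM that by auto
    ultimately have "\<not> pos M (L ! Suc p) < pos M (L ! p)" unfolding Rel_pos[OF dM] by blast
    moreover have "f p \<noteq> f (Suc p)"
    proof
      assume "f p = f (Suc p)"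
      moreover have "M ! f p = L ! p" using pos_in[OF dM inM[of p]] that f_def by simp
      moreover have "M ! f (Suc p) = L ! Suc p" using pos_in[OF dM inM[of "Suc p"]] that f_def by simp
      ultimately have "L ! p = L ! Suc p" by simp
      then show False using dL that n_def by (simp add: nth_eq_iff_index_eq)
    qed
    ultimately show ?thesis unfolding f_def by simp
  qed
  have mono: "f i < f j" if "i < j" "j < n" for i j
    using that
  proof (induction j)
    case 0 then show ?case by simp
  next
    case (Suc j)
    have fj: "f j < f (Suc j)" using adj[of j] Suc.prems(2) by blast
    show ?case
    proof (cases "i = j")
      case True then show ?thesis using fj by simp
    next
      case False
      then have "i < j" using Suc.prems(1) by simp
      then have "f i < f j" using Suc.IH Suc.prems(2) by simp
      then show ?thesis using fj by simp
    qed
  qed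
  have "L ! i = M ! i" if "i < n" for i
  proof -
    have "f i = i" by (rule strict_mono_id[OF mono fb that])
    then show ?thesis using pos_in[OF dM inM[OF that]] f_def by simp
  qed
  then show ?thesis using len n_def by (intro nth_equalityI) simp_all
qed

lemma rearr_sign_cdet:
  assumes "distinct L" "distinct M" "set L = set M" "length (L @ Z) = m"
  shows "cdet m A (L @ Z) = rearr_sign L M * cdet m A (M @ Z)"
  using assms
proof (induction "card (invs L M)" arbitrary: L)
  case 0
  show ?case
  proof (cases "\<exists>p. Suc p < length L \<and> Rel M (L ! p) (L ! Suc p)")
    case True
    then obtain p where p: "Suc p < length L" "Rel M (L ! p) (L ! Suc p)" by blast
    have "invs L M \<noteq> {}" using p unfolding invs_def by auto
    moreover have "finite (invs L M)"
      unfolding invs_def by (rule finite_subset[of _ "{..<length L} \<times> {..<length L}"]) auto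
    ultimately show ?thesis using 0 by simp
  next
    case False
    then have "L = M" using no_adj_inv_eq[OF "0.prems"(1-3)] by blast
    moreover have "invs M M = {}" using "0.prems"(2)
      unfolding invs_def Rel_pos[OF "0.prems"(2)] by (auto simp: pos_nth)
    ultimately show ?thesis by (simp add: rearr_sign_invs)
  qed
next
  case (Suc N)
  note dM = Suc.prems(2)
  have "\<exists>p. Suc p < length L \<and> Rel M (L ! p) (L ! Suc p)"
  proof (rule ccontr)
    assume "\<not> ?thesis"
    then have "L = M" using no_adj_inv_eq[OF Suc.prems(1-3)] by blast
    moreover have "invs M M = {}" using dM
      unfolding invs_def Rel_pos[OF dM] by (auto simp: pos_nth)
    ultimately show False using Suc.hyps(2) by simp
  qed
  then obtain p where p: "Suc p < length L" "Rel M (L ! p) (L ! Suc p)" by blast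
  define L' where "L' = take p L @ L ! Suc p # L ! p # drop (Suc (Suc p)) L"
  have Ldec: "L = take p L @ L ! p # L ! Suc p # drop (Suc (Suc p)) L"
    using p(1) by (metis Cons_nth_drop_Suc Suc_lessD append_take_drop_id)
  have lenL': "length L' = length L" using p(1) by (simp add: L'_def)
  have nthL': "L' ! i = L ! tau p i" if "i < length L" for i
    using that p(1) by (auto simp: L'_def tau_def nth_append nth_Cons' min_def) (rule arg_cong[where f="(!) L"]; linarith)
  have "set L' = set (take p L @ L ! p # L ! Suc p # drop (Suc (Suc p)) L)" unfolding L'_def by auto
  also have "\<dots> = set L" by (rule arg_cong[OF Ldec[symmetric]])
  finally have setL': "set L' = set L" .
  have dL': "distinct L'"
  proof -
    have "distinct (take p L @ L ! p # L ! Suc p # drop (Suc (Suc p)) L)" using Suc.prems(1) Ldec by simp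
    then show ?thesis unfolding L'_def by auto
  qed
  have notrev: "\<not> Rel M (L ! Suc p) (L ! p)" using p(2) Rel_pos[OF dM] by auto
  have inv_eq: "invs L' M = {(i,j). i<j \<and> j<length L \<and> Rel M (L ! tau p i) (L ! tau p j)}"
    unfolding invs_def lenL' using nthL' by auto
  note cs = card_swap_invs[of p "length L" "\<lambda>i j. Rel M (L ! i) (L ! j)", OF p(1) p(2) notrev]
  have c1: "card (invs L' M) = card (invs L M) - 1"
    unfolding inv_eq using cs(1) by (simp add: invs_def)
  have c2: "card (invs L M) > 0" using cs(2) by (simp add: invs_def)
  note cards = c1 c2
  have IH: "cdet m A (L' @ Z) = rearr_sign L' M * cdet m A (M @ Z)"
    using Suc.hyps(1)[of L'] cards Suc.hyps(2) dL' dM setL' Suc.prems(3,4) lenL' by simp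
  have "cdet m A (L @ Z) = - cdet m A (L' @ Z)"
    using cdet_swap2[of "take p L" "drop (Suc (Suc p)) L @ Z" m A "L ! p" "L ! Suc p"] Suc.prems(4) p(1)
    by (subst Ldec) (simp add: L'_def)
  moreover have "rearr_sign L M = - rearr_sign L' M"
  proof -
    obtain c' where c': "card (invs L M) = Suc c'" using cards(2) gr0_implies_Suc by blast
    then show ?thesis using cards(1) by (simp add: rearr_sign_invs)
  qed
  ultimately show ?case using IH by simp
qed



lemma sum_nth_set: "distinct L \<Longrightarrow> (\<Sum>p<length L. g (L ! p)) = sum g (set L)"
proof -
  assume d: "distinct L"
  have s: "set L = (!) L ` {..<length L}" by (auto simp: in_set_conv_nth)
  have i: "inj_on ((!) L) {..<length L}" using d by (auto simp: inj_on_def nth_eq_iff_index_eq)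
  show ?thesis unfolding s by (simp add: sum.reindex[OF i])
qed

lemma prod_nth_set: "distinct L \<Longrightarrow> (\<Prod>p<length L. g (L ! p)) = prod g (set L)"
proof -
  assume d: "distinct L"
  have s: "set L = (!) L ` {..<length L}" by (auto simp: in_set_conv_nth)
  have i: "inj_on ((!) L) {..<length L}" using d by (auto simp: inj_on_def nth_eq_iff_index_eq)
  show ?thesis unfolding s by (simp add: prod.reindex[OF i])
qed

lemma cdet_move:
  assumes "i \<le> length M" "length (M @ [c] @ Z) = m"
  shows "cdet m A (M @ [c] @ Z) = (-1)^(length M - i) * cdet m A (take i M @ [c] @ drop i M @ Z)"
  using assms
proof (induction "length M - i" arbitrary: i)
  case 0
  then have "i = length M" by simp
  then show ?case by simp
next
  case (Suc d)
  then have i: "i < length M" by simp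
  have IH: "cdet m A (M @ [c] @ Z) = (-1)^(length M - Suc i) * cdet m A (take (Suc i) M @ [c] @ drop (Suc i) M @ Z)"
    using Suc.hyps(1)[of "Suc i"] Suc.hyps(2) Suc.prems(2) i by simp
  have e1: "take (Suc i) M @ [c] @ drop (Suc i) M @ Z = take i M @ M ! i # c # (drop (Suc i) M @ Z)"
    using i by (simp add: take_Suc_conv_app_nth)
  have e2: "take i M @ c # M ! i # (drop (Suc i) M @ Z) = take i M @ [c] @ drop i M @ Z"
    using i by (simp add: Cons_nth_drop_Suc)
  have sw: "cdet m A (take i M @ M ! i # c # (drop (Suc i) M @ Z)) = - cdet m A (take i M @ c # M ! i # (drop (Suc i) M @ Z))"
    by (rule cdet_swap2) (use i Suc.prems(2) in simp)
  have "length M - i = Suc (length M - Suc i)" using i by simp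
  then show ?case using IH sw e1 e2 by simp
qed

lemma cdet_identical_rows:
  assumes "i \<noteq> j" "i < m" "j < m" "\<And>c. A i c = A j c"
  shows "cdet m A L = 0"
  unfolding cdet_def
  by (rule det_identical_rows[OF cmat_carrier assms(1-3)])
     (use assms in \<open>auto simp: cmat_def intro!: eq_vecI\<close>)


definition dd :: "nat \<Rightarrow> (nat \<Rightarrow> nat \<Rightarrow> complex) \<Rightarrow> nat list \<Rightarrow> complex" where
  "dd k b L = cdet k (\<lambda>i. b (Suc i)) L"

definition Dx :: "nat \<Rightarrow> (nat \<Rightarrow> nat \<Rightarrow> complex) \<Rightarrow> (nat \<Rightarrow> complex) \<Rightarrow> nat list \<Rightarrow> complex" where
  "Dx k b x L = cdet (Suc k) (\<lambda>i c. if i = 0 then x c else b i c) L"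

lemma R1:
  assumes "length S = Suc k" "i \<in> {1..k}"
  shows "(\<Sum>p<Suc k. (-1)^p * b i (S ! p) * dd k b (dl p S)) = 0"
proof -
  let ?A = "\<lambda>r c. if r = 0 then b i c else b r c"
  have e: "(\<lambda>r. ?A (Suc r)) = (\<lambda>r. b (Suc r))" by auto
  have "cdet (Suc k) ?A S = 0"
    by (rule cdet_identical_rows[of 0 i]) (use assms in auto)
  moreover have "cdet (Suc k) ?A S = (\<Sum>p<Suc k. (-1)^p * b i (S ! p) * dd k b (dl p S))"
    using cdet_row0[OF assms(1), of ?A] unfolding e dd_def by simp
  ultimately show ?thesis by simp
qed

lemma R2:
  assumes "length S = Suc k"
  shows "(\<Sum>p<Suc k. (-1)^p * x (S ! p) * dd k b (dl p S)) = Dx k b x S"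
proof -
  let ?A = "\<lambda>r c. if r = 0 then x c else b r c"
  have e: "(\<lambda>r. ?A (Suc r)) = (\<lambda>r. b (Suc r))" by auto
  show ?thesis using cdet_row0[OF assms(1), of ?A] unfolding e dd_def Dx_def by simp
qed

lemma R3:
  assumes "length S = Suc k"
  shows "(\<Sum>p<Suc k. (-1)^p * ffun k b x (S ! p) t * dd k b (dl p S)) = Dx k b x S"
proof -
  have "(\<Sum>p<Suc k. (-1)^p * ffun k b x (S ! p) t * dd k b (dl p S))
      = (\<Sum>p<Suc k. (-1)^p * x (S ! p) * dd k b (dl p S)) +
        (\<Sum>p<Suc k. \<Sum>i=1..k. t i * ((-1)^p * b i (S ! p) * dd k b (dl p S)))"
    unfolding ffun_def gfun_def sum.distrib[symmetric]
    by (intro sum.cong refl) (simp add: algebra_simps sum_distrib_left sum_distrib_right)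
  also have "(\<Sum>p<Suc k. \<Sum>i=1..k. t i * ((-1)^p * b i (S ! p) * dd k b (dl p S)))
      = (\<Sum>i=1..k. t i * (\<Sum>p<Suc k. (-1)^p * b i (S ! p) * dd k b (dl p S)))"
    by (subst sum.swap) (simp only: sum_distrib_left)
  also have "\<dots> = 0" using R1[OF assms] by simp
  finally show ?thesis using R2[OF assms] by simp
qed

lemma DEP:
  assumes "distinct L" "length L = k" "C \<subseteq> set L" "\<not> indep_set k b C"
  shows "dd k b L = 0"
proof -
  obtain c where c: "\<forall>i\<in>{1..k}. (\<Sum>j\<in>C. c j * b i j) = 0" "\<exists>j\<in>C. c j \<noteq> 0"
    using assms(4) unfolding indep_set_def by blast
  define w where "w p = (if L ! p \<in> C then c (L ! p) else 0)" for p
  have fin: "finite C" using assms(3) finite_subset by blast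
  have "\<exists>p<k. w p \<noteq> 0"
  proof -
    obtain j where j: "j \<in> C" "c j \<noteq> 0" using c(2) by blast
    then have "j \<in> set L" using assms(3) by blast
    then obtain p where "p < length L" "L ! p = j" by (auto simp: in_set_conv_nth)
    then show ?thesis using j assms(2) w_def by auto
  qed
  moreover have "\<forall>i<k. (\<Sum>p<k. b (Suc i) (L ! p) * w p) = 0"
  proof (intro allI impI)
    fix i assume i: "i < k"
    have "(\<Sum>p<k. b (Suc i) (L ! p) * w p) = (\<Sum>p<length L. (\<lambda>e. if e \<in> C then c e * b (Suc i) e else 0) (L ! p))"
      using assms(2) by (intro sum.cong) (auto simp: w_def)
    also have "\<dots> = (\<Sum>e\<in>set L. if e \<in> C then c e * b (Suc i) e else 0)" by (rule sum_nth_set[OF assms(1)])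
    also have "\<dots> = (\<Sum>e\<in>C. c e * b (Suc i) e)"
      using assms(3) by (simp add: sum.If_cases Int_absorb1)
    also have "\<dots> = 0" using c(1) i by auto
    finally show "(\<Sum>p<k. b (Suc i) (L ! p) * w p) = 0" .
  qed
  ultimately show ?thesis unfolding dd_def cdet_zero_iff by blast
qed


lemma neg1_sq: "((-1::complex)^N) * ((-1)^N) = 1"
  by (simp add: power_mult_distrib[symmetric])

lemma rearr_sign_sq: "rearr_sign L M * rearr_sign L M = 1"
  unfolding rearr_sign_invs by (rule neg1_sq)

lemma distinct_dl: "distinct L \<Longrightarrow> distinct (dl p L)"
proof -
  assume d: "distinct L"
  have "distinct (take p L @ drop p L)" using d by simp
  then have a: "distinct (take p L)" "set (take p L) \<inter> set (drop p L) = {}"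
    unfolding distinct_append by blast+
  have "set (drop (Suc p) L) \<subseteq> set (drop p L)" by (simp add: set_drop_subset_set_drop)
  moreover have "distinct (drop (Suc p) L)" using d by simp
  ultimately show ?thesis using a unfolding dl_def by auto
qed

lemma set_dl:
  assumes "distinct L" "p < length L"
  shows "set (dl p L) = set L - {L ! p}"
proof -
  have L: "L = take p L @ L ! p # drop (Suc p) L" by (rule id_take_nth_drop) (simp add: assms)
  have "distinct (take p L @ L ! p # drop (Suc p) L)" using assms(1) by (subst (asm) L)
  moreover have "set L = set (take p L @ L ! p # drop (Suc p) L)" by (rule arg_cong[OF L, of set])
  ultimately show ?thesis unfolding dl_def by auto
qed


lemma LCform:
  assumes C: "circuit k n b C" and dj: "distinct js" and lj: "length js = k" and sj: "set js \<subseteq> {1..n}"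
    and cC: "c \<in> C" and cj: "c \<notin> set js" and int: "set js \<inter> C = C - {c}"
    and t: "t \<in> complU k n b x"
  shows "LC k b x a C js t = (-1)^k * Dx k b x (js @ [c]) * (\<Prod>e\<in>insert c (set js). a e / ffun k b x e t)"
proof -
  have Cn: "C \<subseteq> {1..n}" and ndep: "\<not> indep_set k b C" using C unfolding circuit_def by auto
  have finC: "finite C" using Cn finite_subset by blast
  define cs where "cs = sorted_list_of_set C"
  have dcs: "distinct cs" using finC by (simp add: cs_def)
  have scs: "set cs = C" using finC by (simp add: cs_def)
  define r where "r = length cs"
  have "c \<in> set cs" using cC scs by simp
  then obtain m0 where m0: "m0 < r" "cs ! m0 = c" using in_set_conv_nth[of c cs] unfolding r_def by blast
  define ss where "ss = filter (\<lambda>j. j \<notin> C) js"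
  have dss: "distinct ss" using dj by (simp add: ss_def)
  have sss: "set ss = set js - C" by (auto simp: ss_def)
  have condE: "\<exists>m0<r. set js \<inter> C = C - {cs ! m0}" using m0 int by blast
  have the: "(THE m0. m0 < r \<and> set js \<inter> C = C - {cs ! m0}) = m0"
  proof (rule the_equality)
    show "m0 < r \<and> set js \<inter> C = C - {cs ! m0}" using m0 int by simp
  next
    fix m' assume m': "m' < r \<and> set js \<inter> C = C - {cs ! m'}"
    have "cs ! m' \<in> C" using nth_mem[of m' cs] m' scs r_def by simp
    then have "cs ! m' = c" using m' int cC by blast
    then show "m' = m0" using nth_eq_iff_index_eq[OF dcs, of m' m0] m0 m' r_def by simp
  qed
  define M0 where "M0 = dl m0 cs @ ss"
  have LCeq: "LC k b x a C js t = rearr_sign js M0 * (-1)^(Suc m0) *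
      (\<Sum>l<r. (-1)^(Suc l) * a (cs ! l) * wfun k b x a (dl l cs @ ss) t)"
    using condE dj the unfolding LC_def Let_def cs_def[symmetric] r_def[symmetric] ss_def[symmetric]
    by (simp add: dl_def M0_def ss_def)
  have cardC: "card C = r" using distinct_card[OF dcs] scs r_def by simp
  have sjs: "set js = (C - {c}) \<union> set ss" using int sss by blast
  have disj: "(C - {c}) \<inter> set ss = {}" using sss by blast
  have "k = card (set js)" using distinct_card[OF dj] lj by simp
  also have "\<dots> = card (C - {c}) + card (set ss)" unfolding sjs
    by (rule card_Un_disjoint) (use finC disj in auto)
  also have "\<dots> = (r - 1) + length ss" using cardC cC dss distinct_card by (simp add: card_Diff_singleton)
  finally have kr: "k = (r - 1) + length ss" .
  have r1: "r \<ge> 1" using m0 by simp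
  define T where "T = cs @ ss"
  have lT: "length T = Suc k" using kr r1 by (simp add: T_def r_def)
  have dT: "distinct T" using dcs dss sss scs by (auto simp: T_def)
  have dlT: "dl l T = dl l cs @ ss" if "l < r" for l
    using that by (simp add: dl_def T_def r_def)
  define P where "P = (\<Prod>e\<in>insert c (set js). a e / ffun k b x e t)"
  have fnz: "ffun k b x e t \<noteq> 0" if "e \<in> {1..n}" for e using t that by (auto simp: complU_def)
  have ins: "insert c (set js) = C \<union> set ss" using sjs cC by blast
  have insn: "insert c (set js) \<subseteq> {1..n}" using sj cC Cn by blast
  have trm: "a (cs ! l) * wfun k b x a (dl l cs @ ss) t = ffun k b x (cs ! l) t * dd k b (dl l cs @ ss) * P"
    if l: "l < r" for l
  proof -
    let ?L = "dl l cs @ ss"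
    have dL: "distinct ?L" using distinct_dl[OF dT, of l] dlT[OF l] by simp
    have csC: "cs ! l \<in> C" using nth_mem[of l cs] l r_def scs by simp
    have ssC: "set ss \<inter> C = {}" unfolding ss_def by auto
    have sL: "set ?L = insert c (set js) - {cs ! l}"
    proof -
      have "set ?L = (C - {cs ! l}) \<union> set ss" using set_dl[OF dcs, of l] l r_def scs by simp
      then show ?thesis unfolding ins using csC ssC by blast
    qed
    have csl: "cs ! l \<in> insert c (set js)" unfolding ins using csC by blast
    have fl: "ffun k b x (cs ! l) t \<noteq> 0" using fnz csl insn by blast
    have "wfun k b x a ?L t = dd k b ?L * (\<Prod>e\<in>set ?L. a e / ffun k b x e t)"
    proof -
      have pr: "(\<Prod>p<length ?L. (\<lambda>e. a e / ffun k b x e t) (?L ! p)) = (\<Prod>e\<in>set ?L. a e / ffun k b x e t)"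
        by (rule prod_nth_set[OF dL])
      show ?thesis by (simp only: wfun_def dcoef_cdet dd_def pr)
    qed
    moreover have "P = a (cs ! l) / ffun k b x (cs ! l) t * (\<Prod>e\<in>set ?L. a e / ffun k b x e t)"
      unfolding P_def sL by (rule prod.remove[OF _ csl]) simp
    ultimately show ?thesis using fl by (simp add: field_simps)
  qed
  have sumE: "(\<Sum>l<r. (-1)^(Suc l) * a (cs ! l) * wfun k b x a (dl l cs @ ss) t)
      = - P * (\<Sum>l<r. (-1)^l * ffun k b x (T ! l) t * dd k b (dl l T))"
    unfolding sum_distrib_left
  proof (intro sum.cong refl)
    fix l assume "l \<in> {..<r}"
    then have l: "l < r" by simp
    have Tl: "T ! l = cs ! l" using l by (simp add: T_def nth_append r_def)
    show "(-1)^(Suc l) * a (cs ! l) * wfun k b x a (dl l cs @ ss) t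
        = - P * ((-1)^l * ffun k b x (T ! l) t * dd k b (dl l T))"
      unfolding Tl dlT[OF l] using trm[OF l] by (simp add: algebra_simps)
  qed
  have R3T: "(\<Sum>p<Suc k. (-1)^p * ffun k b x (T ! p) t * dd k b (dl p T)) = Dx k b x T"
    by (rule R3[OF lT])
  have zero: "dd k b (dl p T) = 0" if "p \<in> {r..<Suc k}" for p
  proof (rule DEP[OF distinct_dl[OF dT] _ _ ndep])
    show "length (dl p T) = k" using that lT by simp
    have "take p T = cs @ take (p - r) ss" using that by (simp add: T_def r_def)
    then show "C \<subseteq> set (dl p T)" using scs unfolding dl_def by auto
  qed
  have "{..<Suc k} = {..<r} \<union> {r..<Suc k}" using kr by auto
  then have "(\<Sum>p<Suc k. (-1)^p * ffun k b x (T ! p) t * dd k b (dl p T))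
      = (\<Sum>p<r. (-1)^p * ffun k b x (T ! p) t * dd k b (dl p T))"
  proof -
    let ?F = "\<lambda>p. (-1)^p * ffun k b x (T ! p) t * dd k b (dl p T)"
    have "(\<Sum>p\<in>{..<r} \<union> {r..<Suc k}. ?F p) = (\<Sum>p<r. ?F p) + (\<Sum>p\<in>{r..<Suc k}. ?F p)"
      by (rule sum.union_disjoint) auto
    moreover have "(\<Sum>p\<in>{r..<Suc k}. ?F p) = 0" using zero by (intro sum.neutral) simp
    ultimately show ?thesis using \<open>{..<Suc k} = {..<r} \<union> {r..<Suc k}\<close> by simp
  qed
  then have sumT: "(\<Sum>l<r. (-1)^l * ffun k b x (T ! l) t * dd k b (dl l T)) = Dx k b x T" using R3T by simp
  have dM0: "distinct M0" using distinct_dl[OF dT, of m0] dlT[OF m0(1)] by (simp add: M0_def)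
  have sM0: "set M0 = set js" using set_dl[OF dcs, of m0] m0 r_def scs sjs by (auto simp: M0_def)
  have lM0: "length M0 = k" using distinct_card[OF dM0] distinct_card[OF dj] sM0 lj by simp
  have GL: "Dx k b x (js @ [c]) = rearr_sign js M0 * Dx k b x (M0 @ [c])"
    unfolding Dx_def by (rule rearr_sign_cdet[OF dj dM0 sM0[symmetric]]) (simp add: lj)
  have m0k: "m0 \<le> k" using m0 kr by simp
  have mv: "cdet (Suc k) (\<lambda>i c. if i = 0 then x c else b i c) (M0 @ [c] @ [])
      = (-1)^(length M0 - m0) * cdet (Suc k) (\<lambda>i c. if i = 0 then x c else b i c) (take m0 M0 @ [c] @ drop m0 M0 @ [])"
    by (rule cdet_move) (use lM0 m0k in auto)
  have tk: "take m0 M0 @ [c] @ drop m0 M0 = T"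
  proof -
    have l1: "length (dl m0 cs) = r - 1" using m0 r_def by simp
    have "take m0 M0 = take m0 cs" using l1 m0 by (simp add: M0_def dl_def)
    moreover have "drop m0 M0 = drop (Suc m0) cs @ ss" using l1 m0 by (simp add: M0_def dl_def)
    moreover have "take m0 cs @ [cs ! m0] @ drop (Suc m0) cs = cs"
      using id_take_nth_drop[of m0 cs] m0 r_def by simp
    ultimately show ?thesis using m0 by (simp add: T_def)
  qed
  have DxM: "Dx k b x (M0 @ [c]) = (-1)^(k - m0) * Dx k b x T"
    using mv tk lM0 unfolding Dx_def by simp
  define \<rho> where "\<rho> = rearr_sign js M0"
  define \<sigma> where "\<sigma> = ((-1::complex)^(k - m0))"
  have rho2: "\<rho> * \<rho> = 1" unfolding \<rho>_def by (rule rearr_sign_sq)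
  have sig2: "\<sigma> * \<sigma> = 1" unfolding \<sigma>_def by (rule neg1_sq)
  have pk: "(-1::complex)^k = (-1)^m0 * \<sigma>" using m0k unfolding \<sigma>_def by (simp add: power_add[symmetric])
  have "LC k b x a C js t = \<rho> * (-1)^(Suc m0) * (- P * Dx k b x T)"
    using LCeq sumE sumT by (simp add: \<rho>_def)
  also have "\<dots> = \<rho> * (-1)^m0 * P * Dx k b x T" by simp
  also have "\<dots> = (-1)^k * (\<rho> * \<sigma> * Dx k b x T) * P"
  proof -
    have e: "(-1)^k * \<sigma> = (-1)^m0" unfolding pk using sig2 by (simp add: mult.assoc)
    show ?thesis unfolding e[symmetric] by (simp add: algebra_simps)
  qed
  also have "\<rho> * \<sigma> * Dx k b x T = Dx k b x (js @ [c])"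
    using GL DxM by (simp add: \<rho>_def \<sigma>_def)
  finally show ?thesis unfolding P_def .
qed



definition inI :: "nat \<Rightarrow> nat \<Rightarrow> (nat \<Rightarrow> nat \<Rightarrow> complex) \<Rightarrow> (nat \<Rightarrow> complex) \<Rightarrow> (nat \<Rightarrow> complex)
    \<Rightarrow> ((nat \<Rightarrow> complex) \<Rightarrow> complex) \<Rightarrow> bool" where
  "inI k n b x a F \<longleftrightarrow> (\<exists>c :: nat \<Rightarrow> (nat \<Rightarrow> complex) \<Rightarrow> complex.
        (\<forall>i\<in>{1..k}. c i \<in> regfun k n b x) \<and>
        (\<forall>t\<in>complU k n b x. F t = (\<Sum>i=1..k. c i t * dPhi k n b x a i t)))"

lemma same_class_inI: "same_class k n b x a p q \<longleftrightarrow> inI k n b x a (\<lambda>t. p t - q t)"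
  unfolding same_class_def inI_def by simp

lemma inI_0: "(\<And>t. t \<in> complU k n b x \<Longrightarrow> F t = 0) \<Longrightarrow> inI k n b x a F"
  unfolding inI_def by (rule exI[of _ "\<lambda>i t. 0"]) (auto intro: regfun.rf_const)

lemma inI_cong: "inI k n b x a F \<Longrightarrow> (\<And>t. t \<in> complU k n b x \<Longrightarrow> F t = G t) \<Longrightarrow> inI k n b x a G"
  unfolding inI_def by metis

lemma inI_add: "inI k n b x a F \<Longrightarrow> inI k n b x a G \<Longrightarrow> inI k n b x a (\<lambda>t. F t + G t)"
proof -
  assume "inI k n b x a F" "inI k n b x a G"
  then obtain c d where c: "\<forall>i\<in>{1..k}. c i \<in> regfun k n b x" "\<forall>t\<in>complU k n b x. F t = (\<Sum>i=1..k. c i t * dPhi k n b x a i t)"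
    and d: "\<forall>i\<in>{1..k}. d i \<in> regfun k n b x" "\<forall>t\<in>complU k n b x. G t = (\<Sum>i=1..k. d i t * dPhi k n b x a i t)"
    unfolding inI_def by blast
  show ?thesis unfolding inI_def
    by (rule exI[of _ "\<lambda>i t. c i t + d i t"])
       (use c d in \<open>auto intro: regfun.rf_add simp: sum.distrib distrib_right\<close>)
qed

lemma inI_mult: "g \<in> regfun k n b x \<Longrightarrow> inI k n b x a F \<Longrightarrow> inI k n b x a (\<lambda>t. g t * F t)"
proof -
  assume g: "g \<in> regfun k n b x" and "inI k n b x a F"
  then obtain c where c: "\<forall>i\<in>{1..k}. c i \<in> regfun k n b x" "\<forall>t\<in>complU k n b x. F t = (\<Sum>i=1..k. c i t * dPhi k n b x a i t)"
    unfolding inI_def by blast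
  show ?thesis unfolding inI_def
    by (rule exI[of _ "\<lambda>i t. g t * c i t"])
       (use c g in \<open>auto intro: regfun.rf_mult simp: sum_distrib_left mult.assoc\<close>)
qed

lemma inI_neg: "inI k n b x a F \<Longrightarrow> inI k n b x a (\<lambda>t. - F t)"
proof -
  assume "inI k n b x a F"
  then have "inI k n b x a (\<lambda>t. (\<lambda>t. -1) t * F t)" by (intro inI_mult regfun.rf_const)
  then show ?thesis by simp
qed

lemma inI_diff: "inI k n b x a F \<Longrightarrow> inI k n b x a G \<Longrightarrow> inI k n b x a (\<lambda>t. F t - G t)"
  using inI_add[OF _ inI_neg[of k n b x a G], of F] by simp

lemma inI_sum: "finite S \<Longrightarrow> (\<And>s. s \<in> S \<Longrightarrow> inI k n b x a (F s)) \<Longrightarrow> inI k n b x a (\<lambda>t. \<Sum>s\<in>S. F s t)"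
proof (induction S rule: finite_induct)
  case empty then show ?case by (simp add: inI_0)
next
  case (insert s S)
  then have "inI k n b x a (\<lambda>t. F s t + (\<Sum>s\<in>S. F s t))" by (intro inI_add) auto
  then show ?case using insert by simp
qed

lemma inI_gen:
  assumes i: "i \<in> {1..k}" shows "inI k n b x a (\<lambda>t. dPhi k n b x a i t)"
  unfolding inI_def
proof (rule exI[of _ "\<lambda>i' t. if i' = i then 1 else 0"], intro conjI ballI)
  fix i' assume "i' \<in> {1..k}"
  show "(\<lambda>t. if i' = i then 1 else 0) \<in> regfun k n b x" by (cases "i' = i") (auto intro: regfun.rf_const)
next
  fix t
  have "(\<Sum>ia=1..k. (if ia = i then 1 else 0) * dPhi k n b x a ia t) = (\<Sum>ia=1..k. if ia = i then dPhi k n b x a ia t else 0)"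
    by (rule sum.cong) auto
  also have "\<dots> = dPhi k n b x a i t" using i by (simp add: sum.delta)
  finally show "dPhi k n b x a i t = (\<Sum>ia=1..k. (if ia = i then 1 else 0) * dPhi k n b x a ia t)" by simp
qed

lemma regfun_prod: "finite S \<Longrightarrow> (\<And>s. s \<in> S \<Longrightarrow> g s \<in> regfun k n b x) \<Longrightarrow> (\<lambda>t. \<Prod>s\<in>S. g s t) \<in> regfun k n b x"
proof (induction S rule: finite_induct)
  case empty then show ?case by (simp add: regfun.rf_const)
next
  case (insert s S)
  then have "(\<lambda>t. g s t * (\<Prod>s\<in>S. g s t)) \<in> regfun k n b x" by (intro regfun.rf_mult) auto
  then show ?case using insert by simp
qed

lemma u_reg: "j \<in> {1..n} \<Longrightarrow> (\<lambda>t. a j / ffun k b x j t) \<in> regfun k n b x"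
proof -
  assume j: "j \<in> {1..n}"
  have "(\<lambda>t. (\<lambda>t. a j) t * (\<lambda>t. 1 / ffun k b x j t) t) \<in> regfun k n b x"
    by (intro regfun.rf_mult regfun.rf_const regfun.rf_inv j)
  then show ?thesis by simp
qed

lemma sum_1n_list:
  fixes n :: nat
  assumes "distinct L" "set L \<subseteq> {1..n}" "\<And>e. e \<notin> set L \<Longrightarrow> g e = 0"
  shows "(\<Sum>e=1..n. g e) = (\<Sum>p<length L. g (L ! p))"
proof -
  have "(\<Sum>e=1..n. g e) = (\<Sum>e\<in>set L. g e)"
    using assms by (intro sum.mono_neutral_right) auto
  also have "\<dots> = (\<Sum>p<length L. g (L ! p))" by (rule sum_nth_set[OF assms(1), symmetric])
  finally show ?thesis .
qed

lemma wfun_nd: "length js = k \<Longrightarrow> \<not> distinct js \<Longrightarrow> wfun k b x a js t = 0"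
  unfolding wfun_def dcoef_cdet by (simp add: cdet_nondistinct)

lemma LC_nd: "\<not> distinct js \<Longrightarrow> LC k b x a C js t = 0"
  unfolding LC_def Let_def by simp

lemma Kop_nd: "\<not> distinct js \<Longrightarrow> Kop k n b x a lam j js t = 0"
  unfolding Kop_def by (simp add: LC_nd)

lemma LCcond:
  assumes "finite C" "LC k b x a C js t \<noteq> 0"
  shows "distinct js \<and> (\<exists>c\<in>C. set js \<inter> C = C - {c})"
proof -
  let ?cs = "sorted_list_of_set C"
  have "distinct js \<and> (\<exists>m0<length ?cs. set js \<inter> C = C - {?cs ! m0})"
  proof (rule ccontr)
    assume "\<not> ?thesis"
    then have "LC k b x a C js t = 0" unfolding LC_def Let_def by auto
    then show False using assms(2) by simp
  qed
  moreover have "?cs ! m0 \<in> C" if "m0 < length ?cs" for m0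
    using nth_mem[OF that] assms(1) by simp
  ultimately show ?thesis by blast
qed

lemma wfun_set:
  assumes "distinct js"
  shows "wfun k b x a js t = dd k b js * (\<Prod>e\<in>set js. a e / ffun k b x e t)"
proof -
  have pr: "(\<Prod>p<length js. (\<lambda>e. a e / ffun k b x e t) (js ! p)) = (\<Prod>e\<in>set js. a e / ffun k b x e t)"
    by (rule prod_nth_set[OF assms])
  show ?thesis by (simp only: wfun_def dcoef_cdet dd_def pr)
qed

lemma circ_fin: "circuit k n b C \<Longrightarrow> finite C"
  unfolding circuit_def using finite_subset by blast

lemma finite_circs: "finite {C. circuit k n b C}"
  by (rule finite_subset[of _ "Pow {1..n}"]) (auto simp: circuit_def)


definition mu :: "nat \<Rightarrow> (nat \<Rightarrow> nat \<Rightarrow> complex) \<Rightarrow> nat list \<Rightarrow> nat \<Rightarrow> complex" where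
  "mu k b S e = (if e \<in> set S then (-1)^(pos S e) * dd k b (dl (pos S e) S) else 0)"

lemma mu_nth: "distinct S \<Longrightarrow> p < length S \<Longrightarrow> mu k b S (S ! p) = (-1)^p * dd k b (dl p S)"
  unfolding mu_def by (simp add: pos_nth)

lemma mu_out: "e \<notin> set S \<Longrightarrow> mu k b S e = 0"
  unfolding mu_def by simp

lemma mu_rel:
  fixes n :: nat
  assumes "distinct S" "length S = Suc k" "set S \<subseteq> {1..n}" "i \<in> {1..k}"
  shows "(\<Sum>e=1..n. mu k b S e * b i e) = 0"
proof -
  have "(\<Sum>e=1..n. mu k b S e * b i e) = (\<Sum>p<length S. mu k b S (S ! p) * b i (S ! p))"
    by (rule sum_1n_list[OF assms(1,3)]) (simp add: mu_out)
  also have "\<dots> = (\<Sum>p<Suc k. (-1)^p * b i (S ! p) * dd k b (dl p S))"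
    using assms(1,2) by (intro sum.cong) (auto simp: mu_nth)
  also have "\<dots> = 0" by (rule R1[OF assms(2,4)])
  finally show ?thesis .
qed

lemma mu_x:
  fixes n :: nat
  assumes "distinct S" "length S = Suc k" "set S \<subseteq> {1..n}"
  shows "(\<Sum>e=1..n. mu k b S e * x e) = Dx k b x S"
proof -
  have "(\<Sum>e=1..n. mu k b S e * x e) = (\<Sum>p<length S. mu k b S (S ! p) * x (S ! p))"
    by (rule sum_1n_list[OF assms(1,3)]) (simp add: mu_out)
  also have "\<dots> = (\<Sum>p<Suc k. (-1)^p * x (S ! p) * dd k b (dl p S))"
    using assms(1,2) by (intro sum.cong) (auto simp: mu_nth)
  also have "\<dots> = Dx k b x S" by (rule R2[OF assms(2)])
  finally show ?thesis .
qed

lemma mu_last: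
  assumes "distinct (js @ [j])" "length js = k"
  shows "mu k b (js @ [j]) j = (-1)^k * dd k b js"
proof -
  have "mu k b (js @ [j]) ((js @ [j]) ! k) = (-1)^k * dd k b (dl k (js @ [j]))"
    by (rule mu_nth[OF assms(1)]) (simp add: assms(2))
  moreover have "dl k (js @ [j]) = js" using assms(2) by (simp add: dl_def)
  ultimately show ?thesis using assms(2) by (simp add: nth_append)
qed

lemma uniq_rel:
  fixes n :: nat
  assumes dS: "distinct (js @ [j])" and lj: "length js = k" and sS: "set (js @ [j]) \<subseteq> {1..n}"
    and dnz: "dd k b js \<noteq> 0"
    and nu0: "\<And>e. e \<notin> set (js @ [j]) \<Longrightarrow> \<nu> e = 0"
    and nurel: "\<And>i. i \<in> {1..k} \<Longrightarrow> (\<Sum>e=1..n. \<nu> e * b i e) = 0"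
  shows "\<nu> e * mu k b (js @ [j]) j = \<nu> j * mu k b (js @ [j]) e"
proof -
  let ?S = "js @ [j]"
  let ?mu = "mu k b ?S"
  define \<nu>' where "\<nu>' e = ?mu j * \<nu> e - \<nu> j * ?mu e" for e
  have dj: "distinct js" using dS by simp
  have sj: "set js \<subseteq> {1..n}" using sS by simp
  have jj: "j \<notin> set js" using dS by simp
  have z1: "\<nu>' e = 0" if "e \<notin> set js" for e
  proof (cases "e = j")
    case True then show ?thesis by (simp add: \<nu>'_def)
  next
    case False
    then have "e \<notin> set ?S" using that by simp
    then show ?thesis by (simp add: \<nu>'_def nu0 mu_out)
  qed
  have rel: "(\<Sum>e=1..n. \<nu>' e * b i e) = 0" if i: "i \<in> {1..k}" for i
  proof -
    have "(\<Sum>e=1..n. \<nu>' e * b i e) = ?mu j * (\<Sum>e=1..n. \<nu> e * b i e) - \<nu> j * (\<Sum>e=1..n. ?mu e * b i e)"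
      by (simp add: \<nu>'_def sum_distrib_left sum_subtractf algebra_simps)
    also have "\<dots> = 0" using nurel[OF i] mu_rel[OF dS _ sS i] lj by simp
    finally show ?thesis .
  qed
  have z2: "\<nu>' e = 0" if ej: "e \<in> set js" for e
  proof (rule ccontr)
    assume ne: "\<nu>' e \<noteq> 0"
    define w where "w p = \<nu>' (js ! p)" for p
    have "\<exists>p<k. w p \<noteq> 0"
    proof -
      obtain p where "p < length js" "js ! p = e" using ej by (auto simp: in_set_conv_nth)
      then show ?thesis using ne lj by (auto simp: w_def)
    qed
    moreover have "\<forall>i<k. (\<Sum>p<k. b (Suc i) (js ! p) * w p) = 0"
    proof (intro allI impI)
      fix i assume "i < k"
      then have i: "Suc i \<in> {1..k}" by simp
      have "(\<Sum>p<k. b (Suc i) (js ! p) * w p) = (\<Sum>p<length js. \<nu>' (js ! p) * b (Suc i) (js ! p))"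
        using lj by (simp add: w_def mult.commute)
      also have "\<dots> = (\<Sum>e=1..n. \<nu>' e * b (Suc i) e)"
        by (rule sum_1n_list[OF dj sj, symmetric]) (simp add: z1)
      also have "\<dots> = 0" by (rule rel[OF i])
      finally show "(\<Sum>p<k. b (Suc i) (js ! p) * w p) = 0" .
    qed
    ultimately have "dd k b js = 0" unfolding dd_def cdet_zero_iff by blast
    then show False using dnz by simp
  qed
  have "\<nu>' e = 0" using z1 z2 by blast
  then show ?thesis by (simp add: \<nu>'_def mult.commute)
qed

lemma cdet_swap_gen:
  assumes "length L = m" "p < m" "q < m" "p \<noteq> q"
  shows "cdet m A (L[p := L ! q, q := L ! p]) = - cdet m A L"
proof -
  have "cmat m A (L[p := L ! q, q := L ! p]) = swapcols p q (cmat m A L)"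
    using assms by (intro eq_matI) (auto simp: cmat_def mat_swapcols_def nth_list_update)
  then show ?thesis unfolding cdet_def
    using det_swapcols[OF assms(2,3,4) cmat_carrier] by simp
qed

context
  fixes k n :: nat and b :: "nat \<Rightarrow> nat \<Rightarrow> complex" and x a :: "nat \<Rightarrow> complex"
    and lam :: "nat set \<Rightarrow> nat \<Rightarrow> complex"
  assumes lam_supp: "\<forall>C. circuit k n b C \<longrightarrow> (\<forall>i. i \<notin> C \<longrightarrow> lam C i = 0)"
    and lam_nonzero: "\<forall>C. circuit k n b C \<longrightarrow> (\<exists>i. lam C i \<noteq> 0)"
    and lam_rel: "\<forall>C. circuit k n b C \<longrightarrow> (\<forall>i\<in>{1..k}. (\<Sum>j=1..n. lam C j * b i j) = 0)"
    and x_notin_Delta: "\<forall>C. circuit k n b C \<longrightarrow> fC lam n C x \<noteq> 0"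
begin

lemma Dx_zero_dep:
  assumes dj: "distinct js" and lj: "length js = k" and sj: "set js \<subseteq> {1..n}" and jn: "j \<in> {1..n}"
    and jj: "j \<notin> set js" and d0: "dd k b js = 0" and C: "circuit k n b C"
    and lj0: "lam C j \<noteq> 0" and CS: "C \<subseteq> insert j (set js)"
  shows "Dx k b x (js @ [j]) = 0"
proof -
  let ?S = "js @ [j]"
  let ?X = "\<lambda>r e. if r = 0 then x e else b r e"
  define F where "F = fC lam n C x"
  have F0: "F \<noteq> 0" unfolding F_def using x_notin_Delta C by blast
  have dS: "distinct ?S" using dj jj by simp
  have sS: "set ?S \<subseteq> {1..n}" using sj jn by simp
  have lS: "length ?S = Suc k" using lj by simp
  have lz: "lam C e = 0" if "e \<notin> set ?S" for e
  proof -
    have "e \<notin> C" using CS that by auto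
    then show ?thesis using lam_supp C by blast
  qed
  obtain w where w: "\<exists>p<k. w p \<noteq> 0" "\<forall>i<k. (\<Sum>p<k. b (Suc i) (js ! p) * w p) = 0"
    using d0 unfolding dd_def cdet_zero_iff by blast
  define \<beta> where "\<beta> = (\<Sum>p<k. x (js ! p) * w p)"
  define z where "z p = (if p < k then \<beta> * lam C (js ! p) - F * w p else \<beta> * lam C j)" for p
  have lamsum: "(\<Sum>p<k. ?X r (js ! p) * lam C (js ! p)) + ?X r j * lam C j = (\<Sum>e=1..n. ?X r e * lam C e)" for r
  proof -
    have "(\<Sum>e=1..n. ?X r e * lam C e) = (\<Sum>p<length ?S. ?X r (?S ! p) * lam C (?S ! p))"
      by (rule sum_1n_list[OF dS sS]) (simp add: lz)
    also have "\<dots> = (\<Sum>p<k. ?X r (js ! p) * lam C (js ! p)) + ?X r j * lam C j"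
      using lj by (simp add: nth_append)
    finally show ?thesis by simp
  qed
  have wsum: "(\<Sum>p<k. ?X r (js ! p) * w p) = (if r = 0 then \<beta> else 0)" if rk: "r < Suc k" for r
  proof (cases "r = 0")
    case True then show ?thesis by (simp add: \<beta>_def)
  next
    case False
    then obtain i where i: "r = Suc i" "i < k" using rk by (cases r) auto
    show ?thesis using w(2) i by simp
  qed
  have rows: "(\<Sum>p<Suc k. ?X r (?S ! p) * z p) = 0" if r: "r < Suc k" for r
  proof -
    have "(\<Sum>p<Suc k. ?X r (?S ! p) * z p)
        = (\<Sum>p<k. ?X r (js ! p) * (\<beta> * lam C (js ! p) - F * w p)) + ?X r j * (\<beta> * lam C j)"
      using lj by (simp add: nth_append z_def)
    also have "\<dots> = \<beta> * ((\<Sum>p<k. ?X r (js ! p) * lam C (js ! p)) + ?X r j * lam C j) - F * (\<Sum>p<k. ?X r (js ! p) * w p)"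
      by (simp add: algebra_simps sum_subtractf sum_distrib_left)
    also have "\<dots> = \<beta> * (\<Sum>e=1..n. ?X r e * lam C e) - F * (if r = 0 then \<beta> else 0)"
      unfolding lamsum wsum[OF r] ..
    also have "\<dots> = 0"
    proof (cases "r = 0")
      case True
      have "(\<Sum>e=1..n. ?X r e * lam C e) = F" using True by (simp add: F_def fC_def mult.commute)
      then show ?thesis using True by simp
    next
      case False
      then have "r \<in> {1..k}" using r by auto
      then have "(\<Sum>e=1..n. lam C e * b r e) = 0" using lam_rel C by blast
      then have "(\<Sum>e=1..n. ?X r e * lam C e) = 0" using False by (simp add: mult.commute)
      then show ?thesis using False by simp
    qed
    finally show ?thesis .
  qed
  have nz: "\<exists>p<Suc k. z p \<noteq> 0"
  proof (cases "\<beta> = 0")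
    case True
    obtain p where "p < k" "w p \<noteq> 0" using w(1) by blast
    then show ?thesis using True F0 by (intro exI[of _ p]) (simp add: z_def)
  next
    case False
    then show ?thesis using lj0 by (intro exI[of _ k]) (simp add: z_def)
  qed
  show ?thesis unfolding Dx_def cdet_zero_iff using nz rows by blast
qed


lemma supp_circ:
  assumes C: "circuit k n b C"
  shows "{e. lam C e \<noteq> 0} = C"
proof -
  let ?D = "{e. lam C e \<noteq> 0}"
  have Cn: "C \<subseteq> {1..n}" using C by (simp add: circuit_def)
  have DC: "?D \<subseteq> C" using lam_supp C by blast
  obtain e0 where e0: "lam C e0 \<noteq> 0" using lam_nonzero C by blast
  show ?thesis
  proof (rule ccontr)
    assume "?D \<noteq> C"
    then have "?D \<subset> C" using DC by blast
    then have ind: "indep_set k b ?D" using C unfolding circuit_def by blast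
    have "\<forall>i\<in>{1..k}. (\<Sum>j\<in>?D. lam C j * b i j) = 0"
    proof
      fix i assume i: "i \<in> {1..k}"
      have "(\<Sum>j\<in>?D. lam C j * b i j) = (\<Sum>j=1..n. lam C j * b i j)"
        using DC Cn by (intro sum.mono_neutral_left) auto
      also have "\<dots> = 0" using lam_rel C i by blast
      finally show "(\<Sum>j\<in>?D. lam C j * b i j) = 0" .
    qed
    then have "\<forall>j\<in>?D. lam C j = 0" using ind unfolding indep_set_def by blast
    then show False using e0 by blast
  qed
qed

lemma caseA:
  assumes lj: "length js = k" and sj: "set js \<subseteq> {1..n}" and jn: "j \<in> {1..n}" and jj: "j \<notin> set js"
    and t: "t \<in> complU k n b x"
  shows "a j / ffun k b x j t * wfun k b x a js t = Kop k n b x a lam j js t"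
proof (cases "distinct js")
  case False
  then show ?thesis using lj by (simp add: wfun_nd Kop_nd)
next
  case dj: True
  let ?S = "js @ [j]"
  let ?u = "\<lambda>e. a e / ffun k b x e t"
  define P where "P = (\<Prod>e\<in>insert j (set js). ?u e)"
  have dS: "distinct ?S" using dj jj by simp
  have sS: "set ?S \<subseteq> {1..n}" using sj jn by simp
  have lS: "length ?S = Suc k" using lj by simp
  have LHS: "a j / ffun k b x j t * wfun k b x a js t = dd k b js * P"
    unfolding wfun_set[OF dj] P_def using jj by (simp add: prod.insert)
  have Tfact: "j \<in> C \<and> set js \<inter> C = C - {j} \<and> C \<subseteq> insert j (set js) \<and>
      LC k b x a C js t = (-1)^k * Dx k b x ?S * P"
    if C: "circuit k n b C" and l0: "lam C j \<noteq> 0" and L0: "LC k b x a C js t \<noteq> 0" for C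
  proof -
    have jC: "j \<in> C" using l0 lam_supp C by blast
    obtain c where c: "c \<in> C" "set js \<inter> C = C - {c}" using LCcond[OF circ_fin[OF C] L0] by blast
    have cj: "c = j" using c jC jj by blast
    have int: "set js \<inter> C = C - {j}" using c cj by simp
    have sub: "C \<subseteq> insert j (set js)" using int by blast
    have "LC k b x a C js t = (-1)^k * Dx k b x ?S * P"
      unfolding P_def by (rule LCform[OF C dj lj sj jC jj int t])
    then show ?thesis using jC int sub by blast
  qed
  show ?thesis
  proof (cases "dd k b js = 0")
    case d0: True
    have "Kop k n b x a lam j js t = 0"
      unfolding Kop_def
    proof (rule sum.neutral, rule ballI)
      fix C assume "C \<in> {C. circuit k n b C}"
      then have C: "circuit k n b C" by simp
      show "lam C j / fC lam n C x * LC k b x a C js t = 0"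
      proof (cases "lam C j = 0 \<or> LC k b x a C js t = 0")
        case True then show ?thesis by auto
      next
        case False
        then have l0: "lam C j \<noteq> 0" and L0: "LC k b x a C js t \<noteq> 0" by auto
        have T: "j \<in> C \<and> set js \<inter> C = C - {j} \<and> C \<subseteq> insert j (set js) \<and>
            LC k b x a C js t = (-1)^k * Dx k b x ?S * P" by (rule Tfact[OF C l0 L0])
        have "Dx k b x ?S = 0"
          by (rule Dx_zero_dep[OF dj lj sj jn jj d0 C l0]) (use T in blast)
        then have "LC k b x a C js t = 0" using T by simp
        then show ?thesis using L0 by simp
      qed
    qed
    then show ?thesis using LHS d0 by simp
  next
    case dnz: False
    let ?mu = "mu k b ?S"
    have muj: "?mu j = (-1)^k * dd k b js" by (rule mu_last[OF dS lj])
    have muj0: "?mu j \<noteq> 0" using muj dnz by simp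
    have prp: "lam C e * ?mu j = lam C j * ?mu e" if C: "circuit k n b C" and sub: "C \<subseteq> set ?S" for C e
    proof (rule uniq_rel[OF dS lj sS dnz])
      show "lam C e = 0" if "e \<notin> set ?S" for e using lam_supp C sub that by blast
      show "(\<Sum>e=1..n. lam C e * b i e) = 0" if "i \<in> {1..k}" for i using lam_rel C that by blast
    qed
    define C0 where "C0 = {e. ?mu e \<noteq> 0}"
    have C0S: "C0 \<subseteq> set ?S" unfolding C0_def using mu_out by blast
    have jC0: "j \<in> C0" unfolding C0_def using muj0 by simp
    have eqC0: "C = C0" if C: "circuit k n b C" and l0: "lam C j \<noteq> 0" and sub: "C \<subseteq> set ?S" for C
    proof -
      have "lam C e \<noteq> 0 \<longleftrightarrow> ?mu e \<noteq> 0" for e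
        using prp[OF C sub, of e] muj0 l0 by (metis mult_eq_0_iff)
      then have "{e. lam C e \<noteq> 0} = C0" unfolding C0_def by blast
      then show ?thesis using supp_circ[OF C] by simp
    qed
    have C0circ: "circuit k n b C0"
      unfolding circuit_def
    proof (intro conjI allI impI)
      show "C0 \<subseteq> {1..n}" using C0S sS by blast
      show "\<not> indep_set k b C0"
      proof
        assume ind: "indep_set k b C0"
        have "\<forall>i\<in>{1..k}. (\<Sum>e\<in>C0. ?mu e * b i e) = 0"
        proof
          fix i assume i: "i \<in> {1..k}"
          have "(\<Sum>e\<in>C0. ?mu e * b i e) = (\<Sum>e=1..n. ?mu e * b i e)"
            using C0S sS by (intro sum.mono_neutral_left) (auto simp: C0_def)
          also have "\<dots> = 0" by (rule mu_rel[OF dS lS sS i])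
          finally show "(\<Sum>e\<in>C0. ?mu e * b i e) = 0" .
        qed
        then have "\<forall>e\<in>C0. ?mu e = 0" using ind unfolding indep_set_def by blast
        then show False using jC0 C0_def by blast
      qed
      fix D assume D: "D \<subset> C0"
      show "indep_set k b D"
        unfolding indep_set_def
      proof (intro allI impI ballI)
        fix c e assume crel: "\<forall>i\<in>{1..k}. (\<Sum>j\<in>D. c j * b i j) = 0" and eD: "e \<in> D"
        define \<nu> where "\<nu> e = (if e \<in> D then c e else 0)" for e
        have DS: "D \<subseteq> {1..n}" using D C0S sS by blast
        have pr: "\<nu> e' * ?mu j = \<nu> j * ?mu e'" for e'
        proof (rule uniq_rel[OF dS lj sS dnz])
          show "\<nu> e = 0" if "e \<notin> set ?S" for e using that D C0S by (auto simp: \<nu>_def)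
          show "(\<Sum>e=1..n. \<nu> e * b i e) = 0" if i: "i \<in> {1..k}" for i
          proof -
            have "(\<Sum>e=1..n. \<nu> e * b i e) = (\<Sum>e\<in>D. \<nu> e * b i e)"
              using DS by (intro sum.mono_neutral_right) (auto simp: \<nu>_def)
            also have "\<dots> = (\<Sum>e\<in>D. c e * b i e)" by (intro sum.cong) (auto simp: \<nu>_def)
            also have "\<dots> = 0" using crel i by blast
            finally show ?thesis .
          qed
        qed
        obtain e0 where e0: "e0 \<in> C0" "e0 \<notin> D" using D by blast
        have "\<nu> j * ?mu e0 = 0" using pr[of e0] e0 by (simp add: \<nu>_def)
        then have "\<nu> j = 0" using e0 by (simp add: C0_def)
        then have "\<nu> e * ?mu j = 0" using pr[of e] by simp
        then show "c e = 0" using muj0 eD by (simp add: \<nu>_def)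
      qed
    qed
    have l0C0: "lam C0 j \<noteq> 0"
    proof
      assume "lam C0 j = 0"
      then have "lam C0 e * ?mu j = 0" for e using prp[OF C0circ C0S, of e] by simp
      then have "lam C0 e = 0" for e using muj0 by simp
      then show False using lam_nonzero C0circ by blast
    qed
    have fC0: "?mu j * fC lam n C0 x = lam C0 j * Dx k b x ?S"
    proof -
      have "?mu j * fC lam n C0 x = (\<Sum>e=1..n. lam C0 e * ?mu j * x e)"
        unfolding fC_def by (simp add: sum_distrib_left algebra_simps)
      also have "\<dots> = (\<Sum>e=1..n. lam C0 j * (?mu e * x e))"
        by (intro sum.cong refl) (simp add: prp[OF C0circ C0S])
      also have "\<dots> = lam C0 j * Dx k b x ?S"
        unfolding sum_distrib_left[symmetric] mu_x[OF dS lS sS] ..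
      finally show ?thesis .
    qed
    have fnz: "fC lam n C0 x \<noteq> 0" using x_notin_Delta C0circ by blast
    have int0: "set js \<inter> C0 = C0 - {j}" using C0S jC0 jj by auto
    have LC0: "LC k b x a C0 js t = (-1)^k * Dx k b x ?S * P"
      unfolding P_def by (rule LCform[OF C0circ dj lj sj jC0 jj int0 t])
    have term0: "lam C0 j / fC lam n C0 x * LC k b x a C0 js t = dd k b js * P"
    proof -
      have "lam C0 j / fC lam n C0 x * LC k b x a C0 js t = (lam C0 j * Dx k b x ?S) / fC lam n C0 x * (-1)^k * P"
        unfolding LC0 by (simp add: algebra_simps)
      also have "\<dots> = ?mu j * (-1)^k * P" unfolding fC0[symmetric] using fnz by simp
      also have "\<dots> = dd k b js * P" unfolding muj by (simp add: neg1_sq[unfolded mult.assoc])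
      finally show ?thesis .
    qed
    have others: "lam C j / fC lam n C x * LC k b x a C js t = 0" if C: "circuit k n b C" and ne: "C \<noteq> C0" for C
    proof (rule ccontr)
      assume "lam C j / fC lam n C x * LC k b x a C js t \<noteq> 0"
      then have l0: "lam C j \<noteq> 0" and L0: "LC k b x a C js t \<noteq> 0" by auto
      have "C \<subseteq> set ?S" using Tfact[OF C l0 L0] by auto
      then have "C = C0" by (rule eqC0[OF C l0])
      then show False using ne by simp
    qed
    have "Kop k n b x a lam j js t = lam C0 j / fC lam n C0 x * LC k b x a C0 js t"
      unfolding Kop_def
    proof -
      have mem: "C0 \<in> {C. circuit k n b C}" using C0circ by simp
      have "(\<Sum>C\<in>{C. circuit k n b C} - {C0}. lam C j / fC lam n C x * LC k b x a C js t) = 0"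
        using others by (intro sum.neutral) auto
      then show "(\<Sum>C | circuit k n b C. lam C j / fC lam n C x * LC k b x a C js t)
          = lam C0 j / fC lam n C0 x * LC k b x a C0 js t"
        using sum.remove[OF finite_circs mem, of "\<lambda>C. lam C j / fC lam n C x * LC k b x a C js t"] by simp
    qed
    then show ?thesis using LHS term0 by simp
  qed
qed


lemma perC:
  assumes C: "circuit k n b C" and jC: "j \<in> C" and lj: "length js = k" and sj: "set js \<subseteq> {1..n}"
    and dj: "distinct js" and q: "q < k" "js ! q = j"
  shows "inI k n b x a (\<lambda>t. \<Sum>l=1..n. LC k b x a C (js[q := l]) t)"
proof -
  define A where "A = set js - {j}"
  have Cn: "C \<subseteq> {1..n}" using C by (simp add: circuit_def)
  have ndep: "\<not> indep_set k b C" using C by (simp add: circuit_def)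
  have finC: "finite C" by (rule circ_fin[OF C])
  have jjs: "j \<in> set js" using q lj by (auto simp: in_set_conv_nth)
  have jn: "j \<in> {1..n}" using jjs sj by blast
  have sjA: "set js = insert j A" using jjs A_def by blast
  have jA: "j \<notin> A" by (simp add: A_def)
  have setJS: "set (js[q := l]) = insert l A" for l
    using set_update_distinct[OF dj, of q l] q lj A_def by simp
  have lenJS: "length (js[q := l]) = k" for l using lj by simp
  have sJS: "set (js[q := l]) \<subseteq> {1..n}" if "l \<in> {1..n}" for l using setJS sj that A_def by auto
  have dJS: "distinct (js[q := l])" if "l \<notin> A" for l
    using dj that q lj A_def by (auto simp: distinct_list_update)
  have ndJS: "\<not> distinct (js[q := l])" if "l \<in> A" for l
  proof
    assume d: "distinct (js[q := l])"
    have "length (js[q:=l]) = card (set (js[q:=l]))" using distinct_card[OF d] by simp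
    moreover have "card (set (js[q:=l])) = card A" using setJS[of l] that by (simp add: insert_absorb)
    moreover have "card A = k - 1" using distinct_card[OF dj] lj jjs A_def by simp
    ultimately show False using lenJS[of l] q by simp
  qed
  have JSj: "js[q := j] = js" using list_update_id[of js q] q by simp
  show ?thesis
  proof (cases "\<exists>c1\<in>C. c1 \<noteq> j \<and> A \<inter> C = C - {j, c1}")
    case True
    then obtain c1 where c1: "c1 \<in> C" "c1 \<noteq> j" "A \<inter> C = C - {j, c1}" by blast
    have c1A: "c1 \<notin> A" using c1 by blast
    have c1js: "c1 \<notin> set js" using c1A c1(2) sjA by blast
    show ?thesis
    proof (rule inI_0)
      fix t assume t: "t \<in> complU k n b x"
      have zero: "LC k b x a C (js[q := l]) t = 0" if l: "l \<in> {1..n}" "l \<notin> {j, c1}" for l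
      proof (rule ccontr)
        assume "LC k b x a C (js[q := l]) t \<noteq> 0"
        then have "distinct (js[q := l]) \<and> (\<exists>c\<in>C. set (js[q := l]) \<inter> C = C - {c})"
          by (rule LCcond[OF finC])
        then obtain c where c: "c \<in> C" "insert l A \<inter> C = C - {c}" unfolding setJS by blast
        have "j \<notin> insert l A" using l jA by auto
        then have "j = c" using c jC by blast
        then have "c1 \<in> insert l A" using c c1(1,2) by blast
        then show False using l c1A by auto
      qed
      have "(\<Sum>l=1..n. LC k b x a C (js[q := l]) t) = (\<Sum>l\<in>{j, c1}. LC k b x a C (js[q := l]) t)"
        using zero c1 Cn jn by (intro sum.mono_neutral_right) auto
      also have "\<dots> = LC k b x a C js t + LC k b x a C (js[q := c1]) t"
        using c1(2) JSj by simp
      also have "\<dots> = 0"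
      proof -
        have int1: "set js \<inter> C = C - {c1}" using c1 sjA jC by blast
        have L1: "LC k b x a C js t = (-1)^k * Dx k b x (js @ [c1]) * (\<Prod>e\<in>insert c1 (set js). a e / ffun k b x e t)"
          by (rule LCform[OF C dj lj sj c1(1) c1js int1 t])
        have int2: "set (js[q := c1]) \<inter> C = C - {j}" unfolding setJS using c1 jA jC by blast
        have jn2: "j \<notin> set (js[q := c1])" unfolding setJS using c1(2) jA by blast
        have c1n: "c1 \<in> {1..n}" using c1 Cn by blast
        have L2: "LC k b x a C (js[q := c1]) t = (-1)^k * Dx k b x (js[q := c1] @ [j]) * (\<Prod>e\<in>insert j (set (js[q := c1])). a e / ffun k b x e t)"
          by (rule LCform[OF C dJS[OF c1A] lenJS sJS[OF c1n] jC jn2 int2 t])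
        have sets: "insert j (set (js[q := c1])) = insert c1 (set js)" unfolding setJS sjA by blast
        have sw: "(js @ [c1])[q := (js @ [c1]) ! k, k := (js @ [c1]) ! q] = js[q := c1] @ [j]"
          using q lj by (simp add: list_update_append nth_append)
        have "Dx k b x (js[q := c1] @ [j]) = - Dx k b x (js @ [c1])"
          unfolding Dx_def sw[symmetric] by (rule cdet_swap_gen) (use q lj in auto)
        then show ?thesis unfolding L1 L2 sets by simp
      qed
      finally show "(\<Sum>l=1..n. LC k b x a C (js[q := l]) t) = 0" .
    qed
  next
    case notI: False
    show ?thesis
    proof (cases "A \<inter> C = C - {j}")
      case True
      have CS: "C \<subseteq> set js" using True sjA jC by blast
      let ?X = "\<lambda>i c. if i = 0 then x c else b i c"
      let ?L = "js @ [j]"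
      define cof where "cof i = cofactor (cmat (Suc k) ?X ?L) i q" for i
      have lL: "length ?L = Suc k" using lj by simp
      have qL: "q < Suc k" using q by simp
      have cof0: "cof 0 = 0"
      proof -
        have "cof 0 = (-1)^q * cdet k (\<lambda>i. ?X (Suc i)) (dl q ?L)"
          unfolding cof_def by (rule cofactor0_cmat[OF lL qL])
        moreover have "(\<lambda>i. ?X (Suc i)) = (\<lambda>i. b (Suc i))" by auto
        moreover have "dd k b (dl q ?L) = 0"
        proof (rule DEP[OF _ _ _ ndep])
          have e: "dl q ?L = dl q js @ [j]" using q lj by (simp add: dl_def)
          have djs: "distinct (dl q js)" by (rule distinct_dl[OF dj])
          have sdl: "set (dl q js) = A" using set_dl[OF dj, of q] q lj A_def by simp
          show "distinct (dl q ?L)" unfolding e using djs sdl jA by simp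
          show "length (dl q ?L) = k" using lL qL by simp
          show "C \<subseteq> set (dl q ?L)" unfolding e using sdl CS sjA by auto
        qed
        ultimately show ?thesis unfolding dd_def by simp
      qed
      have DxJS: "Dx k b x (js[q := l] @ [j]) = (\<Sum>i<k. b (Suc i) l * cof (Suc i))" for l
      proof -
        have e: "js[q := l] @ [j] = ?L[q := l]" using q lj by (simp add: list_update_append)
        have "Dx k b x (js[q := l] @ [j]) = (\<Sum>i<Suc k. ?X i l * cof i)"
          unfolding Dx_def e cof_def by (rule cdet_col[OF lL qL])
        also have "\<dots> = (\<Sum>i<k. b (Suc i) l * cof (Suc i))"
          unfolding sum.lessThan_Suc_shift using cof0 by simp
        finally show ?thesis .
      qed
      define R where "R t = (\<Prod>e\<in>set js. a e / ffun k b x e t)" for t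
      have Reg: "R \<in> regfun k n b x"
      proof -
        have "(\<lambda>t. a e / ffun k b x e t) \<in> regfun k n b x" if "e \<in> set js" for e
          using sj that by (intro u_reg) blast
        then show ?thesis unfolding R_def by (intro regfun_prod) auto
      qed
      have eqn: "(\<Sum>l=1..n. LC k b x a C (js[q := l]) t)
          = (\<Sum>i<k. ((-1)^k * cof (Suc i) * R t) * dPhi k n b x a (Suc i) t)" if t: "t \<in> complU k n b x" for t
      proof -
        have each: "LC k b x a C (js[q := l]) t = (-1)^k * Dx k b x (js[q := l] @ [j]) * (a l / ffun k b x l t) * R t"
          if l: "l \<in> {1..n}" for l
        proof (cases "l \<in> set js")
          case True
          have ndx: "Dx k b x (js[q := l] @ [j]) = 0"
          proof (cases "l = j")
            case True
            then show ?thesis unfolding Dx_def using JSj jjs lj by (intro cdet_nondistinct) auto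
          next
            case False
            then have "l \<in> A" using True A_def by simp
            then show ?thesis unfolding Dx_def using ndJS lj by (intro cdet_nondistinct) auto
          qed
          have "LC k b x a C (js[q := l]) t = 0"
          proof (cases "l = j")
            case True
            show ?thesis
            proof (rule ccontr)
              assume "LC k b x a C (js[q := l]) t \<noteq> 0"
              then have "\<exists>c\<in>C. set js \<inter> C = C - {c}" using LCcond[OF finC] True JSj by auto
              then show False using CS by blast
            qed
          next
            case False
            then have "l \<in> A" using True A_def by simp
            then show ?thesis using ndJS LC_nd by blast
          qed
          then show ?thesis using ndx by simp
        next
          case False
          have lA: "l \<notin> A" using False A_def by blast
          have lC: "l \<notin> C" using False CS by blast
          have jn2: "j \<notin> set (js[q := l])" unfolding setJS using False jjs jA by auto
          have int2: "set (js[q := l]) \<inter> C = C - {j}" unfolding setJS using True lC by blast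
          have "LC k b x a C (js[q := l]) t = (-1)^k * Dx k b x (js[q := l] @ [j]) * (\<Prod>e\<in>insert j (set (js[q := l])). a e / ffun k b x e t)"
            by (rule LCform[OF C dJS[OF lA] lenJS sJS[OF l] jC jn2 int2 t])
          moreover have "insert j (set (js[q := l])) = insert l (set js)" unfolding setJS sjA by blast
          moreover have "(\<Prod>e\<in>insert l (set js). a e / ffun k b x e t) = a l / ffun k b x l t * R t"
            unfolding R_def using False by simp
          ultimately show ?thesis by simp
        qed
        have "(\<Sum>l=1..n. LC k b x a C (js[q := l]) t)
            = (\<Sum>l=1..n. \<Sum>i<k. ((-1)^k * cof (Suc i) * R t) * (b (Suc i) l * a l / ffun k b x l t))"
        proof (intro sum.cong refl)
          fix l assume l: "l \<in> {1..n}"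
          show "LC k b x a C (js[q := l]) t = (\<Sum>i<k. ((-1)^k * cof (Suc i) * R t) * (b (Suc i) l * a l / ffun k b x l t))"
            unfolding each[OF l] DxJS sum_distrib_left sum_distrib_right
            by (intro sum.cong refl) (simp add: mult_ac)
        qed
        also have "\<dots> = (\<Sum>i<k. ((-1)^k * cof (Suc i) * R t) * dPhi k n b x a (Suc i) t)"
          unfolding dPhi_def by (subst sum.swap) (simp add: sum_distrib_left)
        finally show ?thesis .
      qed
      have "inI k n b x a (\<lambda>t. \<Sum>i<k. ((-1)^k * cof (Suc i) * R t) * dPhi k n b x a (Suc i) t)"
      proof (rule inI_sum)
        fix i assume "i \<in> {..<k}"
        then have i: "Suc i \<in> {1..k}" by simp
        have reg: "(\<lambda>t. (-1)^k * cof (Suc i) * R t) \<in> regfun k n b x"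
          using regfun.rf_mult[OF regfun.rf_const Reg] by simp
        show "inI k n b x a (\<lambda>t. ((-1)^k * cof (Suc i) * R t) * dPhi k n b x a (Suc i) t)"
          by (rule inI_mult[OF reg inI_gen[OF i]])
      qed simp
      then show ?thesis by (rule inI_cong) (use eqn in simp)
    next
      case notII: False
      show ?thesis
      proof (rule inI_0)
        fix t assume t: "t \<in> complU k n b x"
        have "LC k b x a C (js[q := l]) t = 0" for l
        proof (rule ccontr)
          assume "LC k b x a C (js[q := l]) t \<noteq> 0"
          then have dl': "distinct (js[q := l])" and "\<exists>c\<in>C. set (js[q := l]) \<inter> C = C - {c}"
            using LCcond[OF finC] by blast+
          then obtain c where c: "c \<in> C" "insert l A \<inter> C = C - {c}" unfolding setJS by blast
          have lA: "l \<notin> A" using dl' ndJS by blast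
          show False
          proof (cases "l = j")
            case True
            then have cj: "c \<noteq> j" using c jC by blast
            have "A \<inter> C = (insert l A \<inter> C) - {j}" using jA True by blast
            also have "\<dots> = C - {j, c}" using c(2) by blast
            finally show False using notI c(1) cj by blast
          next
            case False
            have "j \<notin> insert l A" using False jA by simp
            then have cj: "c = j" using c jC by blast
            show False
            proof (cases "l \<in> C")
              case True
              have "A \<inter> C = (insert l A \<inter> C) - {l}" using lA by blast
              also have "\<dots> = C - {j, l}" using c(2) cj by blast
              finally show False using notI True False by blast
            next
              case lC: False
              have "A \<inter> C = insert l A \<inter> C" using lC by blast
              also have "\<dots> = C - {j}" using c(2) cj by blast
              finally show False using notII by blast
            qed
          qed
        qed
        then show "(\<Sum>l=1..n. LC k b x a C (js[q := l]) t) = 0" by simp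
      qed
    qed
  qed
qed


lemma caseB:
  assumes lj: "length js = k" and sj: "set js \<subseteq> {1..n}" and jn: "j \<in> {1..n}"
    and dj: "distinct js" and jjs: "j \<in> set js"
  shows "inI k n b x a (\<lambda>t. a j / ffun k b x j t * wfun k b x a js t - Kop k n b x a lam j js t)"
proof -
  obtain q where q: "q < k" "js ! q = j" using jjs lj by (auto simp: in_set_conv_nth)
  let ?u = "\<lambda>e t. a e / ffun k b x e t"
  define \<gamma> where "\<gamma> i = cofactor (cmat k (\<lambda>i. b (Suc i)) js) i q" for i
  define Q where "Q t = (\<Prod>p\<in>{..<k} - {q}. ?u (js ! p) t)" for t
  have setJS: "set (js[q := l]) = insert l (set js - {j})" for l
    using set_update_distinct[OF dj, of q l] q lj by simp
  have wJS: "wfun k b x a (js[q := l]) t = (\<Sum>i<k. b (Suc i) l * \<gamma> i) * (?u l t * Q t)" for l t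
  proof -
    have d: "dcoef k b (js[q := l]) = (\<Sum>i<k. b (Suc i) l * \<gamma> i)"
      unfolding dcoef_cdet \<gamma>_def by (rule cdet_col[OF lj q(1)])
    have "(\<Prod>p<length (js[q := l]). ?u (js[q := l] ! p) t) = ?u (js[q := l] ! q) t * (\<Prod>p\<in>{..<k} - {q}. ?u (js[q := l] ! p) t)"
      using lj q by (simp add: prod.remove)
    also have "\<dots> = ?u l t * Q t"
      unfolding Q_def using lj q by (simp add: nth_list_update)
    finally show ?thesis unfolding wfun_def d by simp
  qed
  have Qreg: "Q \<in> regfun k n b x"
  proof -
    have "(\<lambda>t. ?u (js ! p) t) \<in> regfun k n b x" if "p \<in> {..<k} - {q}" for p
      using that lj sj by (intro u_reg) (auto simp: subset_iff)
    then show ?thesis unfolding Q_def by (intro regfun_prod) auto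
  qed
  have I1: "inI k n b x a (\<lambda>t. \<Sum>l=1..n. ?u j t * wfun k b x a (js[q := l]) t)"
  proof -
    have "inI k n b x a (\<lambda>t. \<Sum>i<k. (\<gamma> i * ?u j t * Q t) * dPhi k n b x a (Suc i) t)"
    proof (rule inI_sum)
      fix i assume "i \<in> {..<k}"
      then have i: "Suc i \<in> {1..k}" by simp
      have reg: "(\<lambda>t. \<gamma> i * ?u j t * Q t) \<in> regfun k n b x"
        using regfun.rf_mult[OF regfun.rf_mult[OF regfun.rf_const u_reg[OF jn]] Qreg] by simp
      show "inI k n b x a (\<lambda>t. (\<gamma> i * ?u j t * Q t) * dPhi k n b x a (Suc i) t)"
        by (rule inI_mult[OF reg inI_gen[OF i]])
    qed simp
    moreover have "(\<Sum>i<k. (\<gamma> i * ?u j t * Q t) * dPhi k n b x a (Suc i) t)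
        = (\<Sum>l=1..n. ?u j t * wfun k b x a (js[q := l]) t)" for t
    proof -
      have "(\<Sum>l=1..n. ?u j t * wfun k b x a (js[q := l]) t)
          = (\<Sum>l=1..n. \<Sum>i<k. (\<gamma> i * ?u j t * Q t) * (b (Suc i) l * a l / ffun k b x l t))"
        unfolding wJS sum_distrib_left sum_distrib_right
        by (intro sum.cong refl) (simp add: mult_ac)
      also have "\<dots> = (\<Sum>i<k. (\<gamma> i * ?u j t * Q t) * dPhi k n b x a (Suc i) t)"
        unfolding dPhi_def by (subst sum.swap) (simp add: sum_distrib_left)
      finally show ?thesis by simp
    qed
    ultimately show ?thesis by (rule inI_cong; simp)
  qed
  have I2: "inI k n b x a (\<lambda>t. \<Sum>l=1..n. Kop k n b x a lam j (js[q := l]) t)"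
  proof -
    have "inI k n b x a (\<lambda>t. \<Sum>C\<in>{C. circuit k n b C}. lam C j / fC lam n C x * (\<Sum>l=1..n. LC k b x a C (js[q := l]) t))"
    proof (rule inI_sum[OF finite_circs])
      fix C assume "C \<in> {C. circuit k n b C}"
      then have C: "circuit k n b C" by simp
      show "inI k n b x a (\<lambda>t. lam C j / fC lam n C x * (\<Sum>l=1..n. LC k b x a C (js[q := l]) t))"
      proof (cases "lam C j = 0")
        case True then show ?thesis by (intro inI_0) simp
      next
        case False
        then have jC: "j \<in> C" using lam_supp C by blast
        show ?thesis
          by (rule inI_mult[OF regfun.rf_const perC[OF C jC lj sj dj q]])
      qed
    qed
    moreover have "(\<Sum>C\<in>{C. circuit k n b C}. lam C j / fC lam n C x * (\<Sum>l=1..n. LC k b x a C (js[q := l]) t))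
        = (\<Sum>l=1..n. Kop k n b x a lam j (js[q := l]) t)" for t
      unfolding Kop_def sum_distrib_left by (rule sum.swap)
    ultimately show ?thesis by (rule inI_cong; simp)
  qed
  have E: "(\<Sum>l=1..n. ?u j t * wfun k b x a (js[q := l]) t) - (\<Sum>l=1..n. Kop k n b x a lam j (js[q := l]) t)
      = ?u j t * wfun k b x a js t - Kop k n b x a lam j js t" if t: "t \<in> complU k n b x" for t
  proof -
    let ?D = "\<lambda>l. ?u j t * wfun k b x a (js[q := l]) t - Kop k n b x a lam j (js[q := l]) t"
    have z: "?D l = 0" if l: "l \<in> {1..n} - {j}" for l
    proof -
      have "?u j t * wfun k b x a (js[q := l]) t = Kop k n b x a lam j (js[q := l]) t"
      proof (rule caseA)
        show "length (js[q := l]) = k" using lj by simp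
        show "set (js[q := l]) \<subseteq> {1..n}" unfolding setJS using sj l by auto
        show "j \<notin> set (js[q := l])" unfolding setJS using l by auto
      qed (use jn t in auto)
      then show ?thesis by simp
    qed
    have jq: "js[q := j] = js" using list_update_id[of js q] q by simp
    have "(\<Sum>l=1..n. ?u j t * wfun k b x a (js[q := l]) t) - (\<Sum>l=1..n. Kop k n b x a lam j (js[q := l]) t)
        = (\<Sum>l=1..n. ?D l)" by (simp add: sum_subtractf)
    also have "\<dots> = ?D j + (\<Sum>l\<in>{1..n} - {j}. ?D l)" using jn by (simp add: sum.remove)
    also have "(\<Sum>l\<in>{1..n} - {j}. ?D l) = 0" using z by (intro sum.neutral) blast
    finally show ?thesis using jq by simp
  qed
  show ?thesis
    by (rule inI_cong[OF inI_diff[OF I1 I2]]) (use E in simp)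
qed

end


theorem corollary3p9:
  fixes k n :: nat
    and b :: "nat \<Rightarrow> nat \<Rightarrow> complex"
    and x a :: "nat \<Rightarrow> complex"
    and lam :: "nat set \<Rightarrow> nat \<Rightarrow> complex"
  assumes kn: "0 < k" "k < n"
    and g_nonzero: "\<forall>j\<in>{1..n}. \<exists>i\<in>{1..k}. b i j \<noteq> 0"
    and g_span: "\<forall>\<phi> :: nat \<Rightarrow> complex. \<exists>c :: nat \<Rightarrow> complex.
                   \<forall>i\<in>{1..k}. \<phi> i = (\<Sum>j=1..n. c j * b i j)"
    and lam_supp: "\<forall>C. circuit k n b C \<longrightarrow> (\<forall>i. i \<notin> C \<longrightarrow> lam C i = 0)"
    and lam_nonzero: "\<forall>C. circuit k n b C \<longrightarrow> (\<exists>i. lam C i \<noteq> 0)"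
    and lam_rel: "\<forall>C. circuit k n b C \<longrightarrow> (\<forall>i\<in>{1..k}. (\<Sum>j=1..n. lam C j * b i j) = 0)"
    and x_notin_Delta: "\<forall>C. circuit k n b C \<longrightarrow> fC lam n C x \<noteq> 0"
    and a_nonzero: "\<forall>j\<in>{1..n}. a j \<noteq> 0"
    and unbal: "unbalanced k n b x a"
  shows "\<forall>j\<in>{1..n}. \<forall>js. length js = k \<and> set js \<subseteq> {1..n} \<longrightarrow>
           same_class k n b x a
             (\<lambda>t. a j / ffun k b x j t * wfun k b x a js t)
             (Kop k n b x a lam j js)"
proof (intro ballI allI impI)
  fix j js assume jn: "j \<in> {1..n}" and h: "length js = k \<and> set js \<subseteq> {1..n}"
  then have lj: "length js = k" and sj: "set js \<subseteq> {1..n}" by auto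
  show "same_class k n b x a (\<lambda>t. a j / ffun k b x j t * wfun k b x a js t) (Kop k n b x a lam j js)"
    unfolding same_class_inI
  proof (cases "distinct js \<and> j \<in> set js")
    case True
    then show "inI k n b x a (\<lambda>t. a j / ffun k b x j t * wfun k b x a js t - Kop k n b x a lam j js t)"
      using caseB[OF lam_supp lam_nonzero lam_rel x_notin_Delta lj sj jn] by blast
  next
    case False
    show "inI k n b x a (\<lambda>t. a j / ffun k b x j t * wfun k b x a js t - Kop k n b x a lam j js t)"
    proof (rule inI_0)
      fix t assume t: "t \<in> complU k n b x"
      show "a j / ffun k b x j t * wfun k b x a js t - Kop k n b x a lam j js t = 0"
      proof (cases "distinct js")
        case True
        then have "j \<notin> set js" using False by blast
        then show ?thesis using caseA[OF lam_supp lam_nonzero lam_rel x_notin_Delta lj sj jn _ t] by simp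
      next
        case nd: False
        then show ?thesis using lj by (simp add: wfun_nd Kop_nd)
      qed
    qed
  qed
qed

end
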